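(* Let $\mathbf{k}$ be an algebraically closed field of characteristic zero, $\mathcal{A}=\mathbf{k}[x_1,\ldots,x_n]$, $\mathcal{V}=\bigoplus_{i=1}^n\mathcal{A}\frac{\partial}{\partial x_i}$, $\mathcal{L}_+\subset\mathcal{V}$ the subalgebra of vector fields vanishing at the origin, and $\mathcal{D}$ the Weyl algebra. The map $\varphi:\mathcal{A}\# U(\mathcal{V})\to\mathcal{D}\otimes U(\mathcal{L}_+)$ defined on $\mathcal{A}$ as the natural embedding $f\mapsto f\otimes 1$ and on $\mathcal{V}$ by $$\varphi\left(x^k\frac{\partial}{\partial x_p}\right)=x^k\frac{\partial}{\partial x_p}\otimes 1+\sum_{0<m\leq k}\binom{k}{m}x^{k-m}\otimes x^m\frac{\partial}{\partial x_p}$$ extends to a (well-defined) homomorphism of associative algebras.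
   Context: Multi-index notation: $x^k=x_1^{k_1}\cdots x_n^{k_n}$; $0<m\le k$ means $m\le k$ componentwise and $m\neq0$; $\binom{k}{m}=\prod_i\binom{k_i}{m_i}$. $\mathcal{L}_+$ is spanned by $x^m\frac{\partial}{\partial x_p}$ with $m\ne 0$. The smash product $\mathcal{A}\# U(\mathcal{V})$ is $\mathcal{A}\otimes U(\mathcal{V})$ with product $(f\# u)(g\# v)=\sum_i f\,u_i^{(1)}(g)\# u_i^{(2)}v$ where $\Delta(u)=\sum_i u_i^{(1)}\otimes u_i^{(2)}$ is the coproduct; in particular $(1\#\eta)(f\#1)=f\#\eta+\eta(f)\#1$ for $\eta\in\mathcal{V}$, $f\in\mathcal{A}$. It is generated by $\mathcal{A}$ and $\mathcal{V}$. *)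

theory Defs
  imports "HOL-Library.Poly_Mapping" "HOL-Algebra.QuotRing"
          "HOL-Computational_Algebra.Polynomial"
begin

declare [[typedef_overloaded]]

definition alg_closed :: "'k::field itself \<Rightarrow> bool" where
  "alg_closed _ \<longleftrightarrow> (\<forall>p :: 'k poly. degree p \<ge> 1 \<longrightarrow> (\<exists>x. poly p x = 0))"

datatype 'g fword = FW "'g list"

fun fw_list :: "'g fword \<Rightarrow> 'g list" where "fw_list (FW xs) = xs"

instantiation fword :: (type) monoid_add
begin
definition zero_fword :: "'a fword" where "zero_fword = FW []"
definition plus_fword :: "'a fword \<Rightarrow> 'a fword \<Rightarrow> 'a fword" where
  "plus_fword a b = FW (fw_list a @ fw_list b)"
instance
proof
  fix a b c :: "'a fword"
  show "a + b + c = a + (b + c)" by (cases a; cases b; cases c) (simp add: plus_fword_def)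
  show "0 + a = a" by (cases a) (simp add: plus_fword_def zero_fword_def)
  show "a + 0 = a" by (cases a) (simp add: plus_fword_def zero_fword_def)
qed
end

text \<open>The free associative (noncommutative) 'k-algebra on generators of type 'g:
  finitely supported 'k-valued functions on words, with convolution product.\<close>
type_synonym ('g, 'k) falg = "'g fword \<Rightarrow>\<^sub>0 'k"

definition gen :: "'g \<Rightarrow> ('g, 'k::semiring_1) falg" where
  "gen g = Poly_Mapping.single (FW [g]) 1"

definition scal :: "'k::semiring_1 \<Rightarrow> ('g, 'k) falg" where
  "scal c = Poly_Mapping.single 0 c"

definition cls_ring :: "'a::ring_1 ring" where
  "cls_ring = \<lparr>carrier = UNIV, monoid.mult = (*), one = 1, ring.zero = 0, add = (+)\<rparr>"

definition presented :: "('g, 'k::comm_ring_1) falg set \<Rightarrow> ('g, 'k) falg set ring" where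
  "presented R = cls_ring Quot (genideal cls_ring R)"

definition cls :: "('g, 'k::comm_ring_1) falg set \<Rightarrow> ('g, 'k) falg \<Rightarrow> ('g, 'k) falg set" where
  "cls R a = genideal cls_ring R +>\<^bsub>cls_ring\<^esub> a"

text \<open>\<A> = k[x_i : i in 'n], polynomials as finitely supported functions on monomial
  exponents (multi-indices, finitely supported 'n to nat).\<close>
type_synonym ('n, 'k) mpoly = "('n \<Rightarrow>\<^sub>0 nat) \<Rightarrow>\<^sub>0 'k"

definition smult_mp :: "'k::comm_ring_1 \<Rightarrow> ('n, 'k) mpoly \<Rightarrow> ('n, 'k) mpoly" where
  "smult_mp c f = Poly_Mapping.single 0 c * f"

definition pd :: "'n \<Rightarrow> ('n, 'k::comm_ring_1) mpoly \<Rightarrow> ('n, 'k) mpoly" where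
  "pd i f = (\<Sum>e\<in>Poly_Mapping.keys f. Poly_Mapping.single (e - Poly_Mapping.single i (1::nat))
                                              (of_nat (Poly_Mapping.lookup e i) * Poly_Mapping.lookup f e))"

text \<open>Vector fields \<V> = (+)_i \<A> d/dx_i, as the tuple of coefficient polynomials.\<close>
type_synonym ('n, 'k) vfield = "'n \<Rightarrow> ('n, 'k) mpoly"

definition act :: "('n::finite, 'k::comm_ring_1) vfield \<Rightarrow> ('n, 'k) mpoly \<Rightarrow> ('n, 'k) mpoly" where
  "act \<eta> f = (\<Sum>p\<in>UNIV. \<eta> p * pd p f)"

definition lie :: "('n::finite, 'k::comm_ring_1) vfield \<Rightarrow> ('n, 'k) vfield \<Rightarrow> ('n, 'k) vfield" where
  "lie \<eta> \<xi> = (\<lambda>p. act \<eta> (\<xi> p) - act \<xi> (\<eta> p))"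

definition smult_vf :: "'k::comm_ring_1 \<Rightarrow> ('n, 'k) vfield \<Rightarrow> ('n, 'k) vfield" where
  "smult_vf c \<eta> = (\<lambda>p. smult_mp c (\<eta> p))"

definition vfm :: "('n \<Rightarrow>\<^sub>0 nat) \<Rightarrow> 'n \<Rightarrow> ('n, 'k::comm_ring_1) vfield" where
  "vfm k p = (\<lambda>q. if q = p then Poly_Mapping.single k 1 else 0)"

text \<open>\<L>_+ : vector fields vanishing at the origin (all coefficients have zero constant term).\<close>
typedef ('n, 'k) lplus = "{\<eta> :: ('n, 'k::zero) vfield. \<forall>p. Poly_Mapping.lookup (\<eta> p) 0 = 0}"
  morphisms Rep_lp Abs_lp
  by (rule exI[of _ "\<lambda>p. 0"]) simp

datatype ('n, 'k) sgen = GA "('n, 'k) mpoly" | GV "('n, 'k) vfield"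

definition smash_rel :: "(('n::finite, 'k::comm_ring_1) sgen, 'k) falg set" where
  "smash_rel =
     {gen (GA (f + g)) - gen (GA f) - gen (GA g) | f g. True}
   \<union> {gen (GA (smult_mp c f)) - scal c * gen (GA f) | c f. True}
   \<union> {gen (GA (f * g)) - gen (GA f) * gen (GA g) | f g. True}
   \<union> {gen (GA 1) - 1}
   \<union> {gen (GV (\<lambda>p. \<eta> p + \<xi> p)) - gen (GV \<eta>) - gen (GV \<xi>) | \<eta> \<xi>. True}
   \<union> {gen (GV (smult_vf c \<eta>)) - scal c * gen (GV \<eta>) | c \<eta>. True}
   \<union> {gen (GV \<eta>) * gen (GV \<xi>) - gen (GV \<xi>) * gen (GV \<eta>) - gen (GV (lie \<eta> \<xi>)) | \<eta> \<xi>. True}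
   \<union> {gen (GV \<eta>) * gen (GA f) - gen (GA f) * gen (GV \<eta>) - gen (GA (act \<eta> f)) | \<eta> f. True}"

definition SmashAlg :: "(('n::finite, 'k::comm_ring_1) sgen, 'k) falg set ring" where
  "SmashAlg = presented smash_rel"

datatype ('n, 'k) tgen = Tx 'n | Td 'n | TL "('n, 'k) lplus"

definition target_rel :: "(('n::finite, 'k::comm_ring_1) tgen, 'k) falg set" where
  "target_rel =
     \<comment> \<open>Weyl algebra \<D>\<close>
     {gen (Tx i) * gen (Tx j) - gen (Tx j) * gen (Tx i) | i j. True}
   \<union> {gen (Td i) * gen (Td j) - gen (Td j) * gen (Td i) | i j. True}
   \<union> {gen (Td i) * gen (Tx j) - gen (Tx j) * gen (Td i) - (if i = j then 1 else 0) | i j. True}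
     \<comment> \<open>U(\<L>_+)\<close>
   \<union> {gen (TL (Abs_lp (\<lambda>p. Rep_lp a p + Rep_lp b p))) - gen (TL a) - gen (TL b) | a b. True}
   \<union> {gen (TL (Abs_lp (smult_vf c (Rep_lp a)))) - scal c * gen (TL a) | c a. True}
   \<union> {gen (TL a) * gen (TL b) - gen (TL b) * gen (TL a) - gen (TL (Abs_lp (lie (Rep_lp a) (Rep_lp b)))) | a b. True}
     \<comment> \<open>the two tensor factors commute\<close>
   \<union> {gen (Tx i) * gen (TL a) - gen (TL a) * gen (Tx i) | i a. True}
   \<union> {gen (Td i) * gen (TL a) - gen (TL a) * gen (Td i) | i a. True}"

definition TargetAlg :: "(('n::finite, 'k::comm_ring_1) tgen, 'k) falg set ring" where
  "TargetAlg = presented target_rel"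

text \<open>An enumeration of the variables (the x_i commute in \<D>, so the order is irrelevant).\<close>
definition idx_list :: "'n::finite list" where
  "idx_list = (SOME xs. distinct xs \<and> set xs = UNIV)"

definition wmono :: "('n::finite \<Rightarrow>\<^sub>0 nat) \<Rightarrow> (('n, 'k::comm_ring_1) tgen, 'k) falg" where
  "wmono k = prod_list (map (\<lambda>i. gen (Tx i) ^ Poly_Mapping.lookup k i) idx_list)"

definition embA :: "('n::finite, 'k::comm_ring_1) mpoly \<Rightarrow> (('n, 'k) tgen, 'k) falg" where
  "embA f = (\<Sum>k\<in>Poly_Mapping.keys f. scal (Poly_Mapping.lookup f k) * wmono k)"

definition mchoose :: "('n::finite \<Rightarrow>\<^sub>0 nat) \<Rightarrow> ('n \<Rightarrow>\<^sub>0 nat) \<Rightarrow> nat" where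
  "mchoose k m = (\<Prod>i\<in>UNIV. Poly_Mapping.lookup k i choose Poly_Mapping.lookup m i)"

definition phiV :: "('n::finite \<Rightarrow>\<^sub>0 nat) \<Rightarrow> 'n \<Rightarrow> (('n, 'k::comm_ring_1) tgen, 'k) falg" where
  "phiV k p = wmono k * gen (Td p)
     + (\<Sum>m\<in>{m. m \<noteq> 0 \<and> (\<forall>i. Poly_Mapping.lookup m i \<le> Poly_Mapping.lookup k i)}.
          scal (of_nat (mchoose k m)) * wmono (k - m) * gen (TL (Abs_lp (vfm m p))))"

end

theory Submission
  imports Defs
begin

lemma cls_ring_simps[simp]:
  "carrier cls_ring = UNIV" "monoid.mult cls_ring = (*)" "add cls_ring = (+)"
  "one cls_ring = 1" "zero cls_ring = 0"
  by (simp_all add: cls_ring_def)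

lemma ring_cls_ring: "ring (cls_ring :: 'a::ring_1 ring)"
proof (rule ringI)
  show "abelian_group (cls_ring :: 'a ring)"
    apply (rule abelian_groupI)
    apply (auto simp: algebra_simps)
    by (metis add.right_inverse)
  show "monoid (cls_ring :: 'a ring)"
    by (rule monoidI) (auto simp: mult.assoc)
qed (auto simp: algebra_simps)

lemma a_inv_cls[simp]: "a_inv cls_ring x = - (x::'a::ring_1)"
proof -
  interpret ring "cls_ring :: 'a ring" by (rule ring_cls_ring)
  show ?thesis by (rule minus_equality) auto
qed

lemma a_minus_cls[simp]: "a_minus cls_ring x y = x - (y::'a::ring_1)"
  by (simp add: a_minus_def)

abbreviation JJ :: "'a::ring_1 set \<Rightarrow> 'a set" where "JJ R \<equiv> genideal cls_ring R"

lemma ideal_JJ: "ideal (JJ R) (cls_ring :: 'a::ring_1 ring)"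
proof -
  interpret ring "cls_ring :: 'a ring" by (rule ring_cls_ring)
  show ?thesis by (rule genideal_ideal) auto
qed

lemma JJ_add: fixes a b :: "'a::ring_1" shows "a \<in> JJ R \<Longrightarrow> b \<in> JJ R \<Longrightarrow> a + b \<in> JJ R"
  using additive_subgroup.a_closed[OF ideal.axioms(1)[OF ideal_JJ[of R]], of a b] by simp

lemma JJ_zero: "(0::'a::ring_1) \<in> JJ R"
  using additive_subgroup.zero_closed[OF ideal.axioms(1)[OF ideal_JJ[of R]]] by simp

lemma JJ_lmult: fixes a x :: "'a::ring_1" shows "a \<in> JJ R \<Longrightarrow> x * a \<in> JJ R"
  using ideal.I_l_closed[OF ideal_JJ, of a R x] by simp

lemma JJ_rmult: fixes a x :: "'a::ring_1" shows "a \<in> JJ R \<Longrightarrow> a * x \<in> JJ R"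
  using ideal.I_r_closed[OF ideal_JJ, of a R x] by simp

lemma JJ_uminus: fixes a :: "'a::ring_1" shows "a \<in> JJ R \<Longrightarrow> - a \<in> JJ R"
  using JJ_lmult[of a R "-1"] by simp

lemma JJ_gen: fixes r :: "'a::ring_1" shows "r \<in> R \<Longrightarrow> r \<in> JJ R"
proof -
  interpret ring "cls_ring :: 'a::ring_1 ring" by (rule ring_cls_ring)
  show "r \<in> R \<Longrightarrow> r \<in> JJ R" using genideal_self[of R] by auto
qed

lemma JJ_minimal:
  assumes "ideal I (cls_ring :: 'a::ring_1 ring)" "R \<subseteq> I" shows "JJ R \<subseteq> I"
proof -
  interpret ring "cls_ring :: 'a::ring_1 ring" by (rule ring_cls_ring)
  show ?thesis by (rule genideal_minimal[OF assms])
qed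

lemma cls_eq_iff: "cls R a = cls R b \<longleftrightarrow> a - b \<in> JJ (R :: ('g, 'k::comm_ring_1) falg set)"
proof -
  interpret ideal "JJ R" "cls_ring :: ('g, 'k) falg ring" by (rule ideal_JJ)
  have "cls R a = cls R b \<longleftrightarrow> a \<in> JJ R +>\<^bsub>cls_ring\<^esub> b"
    unfolding cls_def
    using a_repr_independence'[of a b] a_repr_independenceD[of a b] by auto
  also have "\<dots> \<longleftrightarrow> a - b \<in> JJ R"
    using a_rcos_module_minus[OF ring_axioms, of b a] by simp
  finally show ?thesis .
qed

lemma carrier_presented: "carrier (presented R) = range (cls (R :: ('g, 'k::comm_ring_1) falg set))"
  unfolding presented_def FactRing_def cls_def A_RCOSETS_def' by auto

lemma mult_presented: fixes R :: "('g, 'k::comm_ring_1) falg set" shows "cls R a \<otimes>\<^bsub>presented R\<^esub> cls R b = cls R (a * b)"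
proof -
  interpret ideal "JJ R" "cls_ring :: ('g, 'k::comm_ring_1) falg ring" by (rule ideal_JJ)
  show ?thesis unfolding presented_def FactRing_def cls_def
    using rcoset_mult_add[of a b] by simp
qed

lemma add_presented: fixes R :: "('g, 'k::comm_ring_1) falg set" shows "cls R a \<oplus>\<^bsub>presented R\<^esub> cls R b = cls R (a + b)"
proof -
  interpret ideal "JJ R" "cls_ring :: ('g, 'k::comm_ring_1) falg ring" by (rule ideal_JJ)
  show ?thesis unfolding presented_def FactRing_def cls_def
    using a_rcos_sum[of a b] by simp
qed

lemma one_presented: fixes R :: "('g, 'k::comm_ring_1) falg set" shows "\<one>\<^bsub>presented R\<^esub> = cls R 1"
  unfolding presented_def FactRing_def cls_def by simp

lemma quotient_hom:
  fixes RS :: "('g, 'k::comm_ring_1) falg set" and RT :: "('h, 'k) falg set"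
  assumes add: "\<And>a b. F (a + b) = F a + F b"
    and mult: "\<And>a b. F (a * b) = F a * F b"
    and one: "F 1 = 1"
    and rel: "\<And>r. r \<in> RS \<Longrightarrow> F r \<in> JJ RT"
  shows "\<exists>\<phi>. \<phi> \<in> ring_hom (presented RS) (presented RT) \<and> (\<forall>a. \<phi> (cls RS a) = cls RT (F a))"
proof -
  have F0: "F 0 = 0" using add[of 0 0] by simp
  have Fminus: "F (a - b) = F a - F b" for a b
    using add[of "a - b" b] by (simp add: algebra_simps)
  define I where "I = {a. F a \<in> JJ RT}"
  have "ideal I (cls_ring :: ('g, 'k) falg ring)"
  proof (rule idealI[OF ring_cls_ring])
    interpret R: ring "cls_ring :: ('g, 'k) falg ring" by (rule ring_cls_ring)
    have inv: "inv\<^bsub>add_monoid (cls_ring :: ('g, 'k) falg ring)\<^esub> x = - x" for x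
      using a_inv_cls[of x] unfolding a_inv_def .
    show "subgroup I (add_monoid (cls_ring :: ('g, 'k) falg ring))"
      apply (rule R.add.subgroupI)
      subgoal by simp
      subgoal proof -
        have "0 \<in> I" unfolding I_def using F0 JJ_zero[of RT] by simp
        then show ?thesis by blast
      qed
      subgoal for a using Fminus[of 0 a] F0 JJ_uminus unfolding I_def by simp
      subgoal for a b using add JJ_add unfolding I_def by simp
      done
    show "\<And>a x. a \<in> I \<Longrightarrow> x \<in> carrier (cls_ring :: ('g, 'k) falg ring) \<Longrightarrow> x \<otimes>\<^bsub>cls_ring\<^esub> a \<in> I"
      by (simp add: I_def mult JJ_lmult)
    show "\<And>a x. a \<in> I \<Longrightarrow> x \<in> carrier (cls_ring :: ('g, 'k) falg ring) \<Longrightarrow> a \<otimes>\<^bsub>cls_ring\<^esub> x \<in> I"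
      by (simp add: I_def mult JJ_rmult)
  qed
  then have sub: "JJ RS \<subseteq> I" by (rule JJ_minimal) (auto simp: I_def rel)
  define \<phi> where "\<phi> X = cls RT (F (SOME a. X = cls RS a))" for X
  have phi: "\<phi> (cls RS a) = cls RT (F a)" for a
  proof -
    have "\<exists>b. cls RS a = cls RS b" by blast
    then have "cls RS a = cls RS (SOME b. cls RS a = cls RS b)" by (rule someI_ex)
    then have "a - (SOME b. cls RS a = cls RS b) \<in> JJ RS" by (simp add: cls_eq_iff)
    then have "F a - F (SOME b. cls RS a = cls RS b) \<in> JJ RT" using sub by (auto simp: I_def Fminus)
    then have "F (SOME b. cls RS a = cls RS b) - F a \<in> JJ RT" using JJ_uminus by fastforce
    then show ?thesis unfolding \<phi>_def cls_eq_iff[symmetric] by simp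
  qed
  have "\<phi> \<in> ring_hom (presented RS) (presented RT)"
  proof (rule ring_hom_memI)
    fix x y assume "x \<in> carrier (presented RS)" "y \<in> carrier (presented RS)"
    then obtain a b where x: "x = cls RS a" and y: "y = cls RS b" by (auto simp: carrier_presented)
    show "\<phi> (x \<otimes>\<^bsub>presented RS\<^esub> y) = \<phi> x \<otimes>\<^bsub>presented RT\<^esub> \<phi> y"
      unfolding x y mult_presented phi mult ..
    show "\<phi> (x \<oplus>\<^bsub>presented RS\<^esub> y) = \<phi> x \<oplus>\<^bsub>presented RT\<^esub> \<phi> y"
      unfolding x y add_presented phi add ..
  next
    fix x assume "x \<in> carrier (presented RS)"
    then obtain a where x: "x = cls RS a" by (auto simp: carrier_presented)
    show "\<phi> x \<in> carrier (presented RT)" unfolding x phi carrier_presented by simp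
  next
    show "\<phi> \<one>\<^bsub>presented RS\<^esub> = \<one>\<^bsub>presented RT\<^esub>"
      unfolding one_presented phi one ..
  qed
  then show ?thesis using phi by blast
qed

lemma scal_0[simp]: "scal 0 = (0 :: ('g, 'k::comm_ring_1) falg)" by (simp add: scal_def)
lemma scal_1[simp]: "scal 1 = (1 :: ('g, 'k::comm_ring_1) falg)" by (simp add: scal_def)
lemma scal_add: "scal (a + b) = (scal a + scal b :: ('g, 'k::comm_ring_1) falg)"
  by (simp add: scal_def single_add)
lemma scal_diff: "scal (a - b) = (scal a - scal b :: ('g, 'k::comm_ring_1) falg)"
  by (simp add: scal_def single_diff)
lemma scal_uminus: "scal (- a) = (- scal a :: ('g, 'k::comm_ring_1) falg)"
  by (simp add: scal_def single_uminus)
lemma scal_mult: "scal (a * b) = (scal a * scal b :: ('g, 'k::comm_ring_1) falg)"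
  by (simp add: scal_def mult_single)
lemma scal_of_nat[simp]: "scal (of_nat n) = (of_nat n :: ('g, 'k::comm_ring_1) falg)"
  by (simp add: scal_def)

lemma mono_expand: "x = (\<Sum>w\<in>Poly_Mapping.keys x. Poly_Mapping.single w (Poly_Mapping.lookup x w))"
proof (rule poly_mapping_eqI)
  fix v
  show "Poly_Mapping.lookup x v = Poly_Mapping.lookup (\<Sum>w\<in>Poly_Mapping.keys x. Poly_Mapping.single w (Poly_Mapping.lookup x w)) v"
    unfolding lookup_sum lookup_single
    by (cases "v \<in> Poly_Mapping.keys x") (auto simp: when_def in_keys_iff)
qed

lemma fword_zero_plus[simp]: "(0::'a fword) + w = w" "w + (0::'a fword) = w" by simp_all

lemma scal_comm: "scal c * x = x * (scal c :: ('g, 'k::comm_ring_1) falg)"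
proof -
  have "scal c * x = (\<Sum>w\<in>Poly_Mapping.keys x. scal c * Poly_Mapping.single w (Poly_Mapping.lookup x w))"
    by (subst mono_expand[of x]) (simp add: sum_distrib_left)
  also have "\<dots> = (\<Sum>w\<in>Poly_Mapping.keys x. Poly_Mapping.single w (Poly_Mapping.lookup x w) * scal c)"
    by (rule sum.cong) (simp_all add: scal_def mult_single mult.commute)
  also have "\<dots> = x * scal c"
    by (subst (3) mono_expand[of x]) (simp add: sum_distrib_right)
  finally show ?thesis .
qed

definition word :: "('g \<Rightarrow> ('h, 'k::comm_ring_1) falg) \<Rightarrow> 'g fword \<Rightarrow> ('h, 'k) falg" where
  "word h w = prod_list (map h (fw_list w))"

definition ext :: "('g \<Rightarrow> ('h, 'k::comm_ring_1) falg) \<Rightarrow> ('g, 'k) falg \<Rightarrow> ('h, 'k) falg" where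
  "ext h a = (\<Sum>w\<in>Poly_Mapping.keys a. scal (Poly_Mapping.lookup a w) * word h w)"

lemma word_plus: "word h (v + w) = word h v * word h w"
  by (cases v; cases w) (simp add: word_def plus_fword_def)

lemma word_zero[simp]: "word h 0 = 1"
  by (simp add: word_def zero_fword_def)

lemma ext_superset:
  assumes "finite S" "Poly_Mapping.keys a \<subseteq> S"
  shows "ext h a = (\<Sum>w\<in>S. scal (Poly_Mapping.lookup a w) * word h w)"
  unfolding ext_def
  by (rule sum.mono_neutral_left[OF assms(1,2)]) (auto simp: in_keys_iff)

lemma ext_add: "ext h (a + b) = ext h a + ext h b"
proof -
  let ?S = "Poly_Mapping.keys a \<union> Poly_Mapping.keys b"
  have "ext h (a + b) = (\<Sum>w\<in>?S. scal (Poly_Mapping.lookup (a + b) w) * word h w)"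
    by (rule ext_superset) (auto simp: keys_add)
  also have "\<dots> = (\<Sum>w\<in>?S. scal (Poly_Mapping.lookup a w) * word h w)
     + (\<Sum>w\<in>?S. scal (Poly_Mapping.lookup b w) * word h w)"
    by (simp add: lookup_add scal_add distrib_right sum.distrib)
  also have "\<dots> = ext h a + ext h b"
    by (subst (1 2) ext_superset[of ?S]) auto
  finally show ?thesis .
qed

lemma ext_zero[simp]: "ext h 0 = 0" by (simp add: ext_def)

lemma ext_sum: "ext h (sum f A) = (\<Sum>i\<in>A. ext h (f i))"
  by (induction A rule: infinite_finite_induct) (simp_all add: ext_add)

lemma ext_single: "ext h (Poly_Mapping.single w c) = scal c * word h w"
  by (cases "c = 0") (simp_all add: ext_def)

lemma scal_mult_mult: "scal (c * d) * (x * y) = scal c * x * (scal d * (y :: ('g, 'k::comm_ring_1) falg))"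
proof -
  have "scal c * x * (scal d * y) = scal c * (x * scal d) * y" by (simp add: mult.assoc)
  also have "\<dots> = scal c * scal d * x * y" by (simp add: scal_comm[of d x] mult.assoc)
  finally show ?thesis by (simp add: scal_mult mult.assoc)
qed

lemma ext_mult: "ext h (a * b) = ext h a * ext h b"
proof -
  have "a * b = (\<Sum>w\<in>Poly_Mapping.keys a. \<Sum>v\<in>Poly_Mapping.keys b.
      Poly_Mapping.single w (Poly_Mapping.lookup a w) * Poly_Mapping.single v (Poly_Mapping.lookup b v))"
    by (subst (1) mono_expand[of a], subst (1) mono_expand[of b]) (simp add: sum_product)
  then have "ext h (a * b) = (\<Sum>w\<in>Poly_Mapping.keys a. \<Sum>v\<in>Poly_Mapping.keys b.
      scal (Poly_Mapping.lookup a w) * word h w * (scal (Poly_Mapping.lookup b v) * word h v))"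
    by (simp add: ext_sum mult_single ext_single word_plus scal_mult_mult)
  also have "\<dots> = ext h a * ext h b"
    by (simp add: ext_def sum_product)
  finally show ?thesis .
qed

lemma ext_one: "ext h 1 = 1"
  using ext_single[of h 0 1] by (simp add: scal_def)

lemma ext_gen: "ext h (gen g) = h g"
  by (simp add: gen_def ext_single word_def)

lemma ext_scal: "ext h (scal c) = scal c"
  by (simp add: scal_def ext_single)

type_synonym ('n, 'k) tf = "(('n, 'k) tgen, 'k) falg"

definition teq :: "('n::finite, 'k::comm_ring_1) tf \<Rightarrow> ('n, 'k) tf \<Rightarrow> bool" (infix "\<approx>" 50) where
  "a \<approx> b \<longleftrightarrow> a - b \<in> JJ target_rel"

lemma teq_refl[simp]: "a \<approx> a" by (simp add: teq_def JJ_zero)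
lemma teq_eq: "a = b \<Longrightarrow> a \<approx> b" by simp
lemma teq_sym: "a \<approx> b \<Longrightarrow> b \<approx> a"
  unfolding teq_def using JJ_uminus by fastforce
lemma teq_trans[trans]: "a \<approx> b \<Longrightarrow> b \<approx> c \<Longrightarrow> a \<approx> c"
  unfolding teq_def using JJ_add by fastforce
lemma teq_add: "a \<approx> b \<Longrightarrow> c \<approx> d \<Longrightarrow> a + c \<approx> b + d"
  unfolding teq_def using JJ_add by (fastforce simp: algebra_simps)
lemma teq_uminus: "a \<approx> b \<Longrightarrow> - a \<approx> - b"
  unfolding teq_def using JJ_uminus by (fastforce simp: algebra_simps)
lemma teq_diff: "a \<approx> b \<Longrightarrow> c \<approx> d \<Longrightarrow> a - c \<approx> b - d"
  using teq_add[OF _ teq_uminus, of a b c d] by simp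
lemma teq_lmult: "a \<approx> b \<Longrightarrow> c * a \<approx> c * b"
  unfolding teq_def using JJ_lmult by (fastforce simp: algebra_simps)
lemma teq_rmult: "a \<approx> b \<Longrightarrow> a * c \<approx> b * c"
  unfolding teq_def using JJ_rmult by (fastforce simp: algebra_simps)
lemma teq_mult: "a \<approx> b \<Longrightarrow> c \<approx> d \<Longrightarrow> a * c \<approx> b * d"
  using teq_lmult teq_rmult teq_trans by blast
lemma teq_sum: "(\<And>i. i \<in> A \<Longrightarrow> f i \<approx> g i) \<Longrightarrow> sum f A \<approx> sum g A"
  by (induction A rule: infinite_finite_induct) (auto intro: teq_add)
lemma teq_rel: "r \<in> target_rel \<Longrightarrow> r \<approx> 0"
  unfolding teq_def by (simp add: JJ_gen)
lemma teq_relI: "a - b \<in> target_rel \<Longrightarrow> a \<approx> b"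
  unfolding teq_def by (simp add: JJ_gen)
lemma teq_iff_diff: "a \<approx> b \<longleftrightarrow> a - b \<approx> 0"
  unfolding teq_def by simp

abbreviation X :: "'n::finite \<Rightarrow> ('n, 'k::comm_ring_1) tf" where "X i \<equiv> gen (Tx i)"
abbreviation DD :: "'n::finite \<Rightarrow> ('n, 'k::comm_ring_1) tf" where "DD i \<equiv> gen (Td i)"
abbreviation LL :: "('n::finite, 'k::comm_ring_1) lplus \<Rightarrow> ('n, 'k) tf" where "LL a \<equiv> gen (TL a)"

lemma T1: "X i * X j \<approx> (X j * X i :: ('n::finite, 'k::comm_ring_1) tf)"
  by (rule teq_relI) (unfold target_rel_def, blast intro: diff_diff_eq[symmetric])
lemma T2: "DD i * DD j \<approx> (DD j * DD i :: ('n::finite, 'k::comm_ring_1) tf)"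
  by (rule teq_relI) (unfold target_rel_def, blast intro: diff_diff_eq[symmetric])
lemma T3: "DD i * X j \<approx> (X j * DD i + (if i = j then 1 else 0) :: ('n::finite, 'k::comm_ring_1) tf)"
  by (rule teq_relI) (unfold target_rel_def, blast intro: diff_diff_eq[symmetric])
lemma T4: "LL (Abs_lp (\<lambda>p. Rep_lp a p + Rep_lp b p)) \<approx> (LL a + LL b :: ('n::finite, 'k::comm_ring_1) tf)"
  by (rule teq_relI) (unfold target_rel_def, blast intro: diff_diff_eq[symmetric])
lemma T5: "LL (Abs_lp (smult_vf c (Rep_lp a))) \<approx> (scal c * LL a :: ('n::finite, 'k::comm_ring_1) tf)"
  by (rule teq_relI) (unfold target_rel_def, blast intro: diff_diff_eq[symmetric])
lemma T6: "LL a * LL b \<approx> (LL b * LL a + LL (Abs_lp (lie (Rep_lp a) (Rep_lp b))) :: ('n::finite, 'k::comm_ring_1) tf)"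
  by (rule teq_relI) (unfold target_rel_def, blast intro: diff_diff_eq[symmetric])
lemma T7: "X i * LL a \<approx> (LL a * X i :: ('n::finite, 'k::comm_ring_1) tf)"
  by (rule teq_relI) (unfold target_rel_def, blast intro: diff_diff_eq[symmetric])
lemma T8: "DD i * LL a \<approx> (LL a * DD i :: ('n::finite, 'k::comm_ring_1) tf)"
  by (rule teq_relI) (unfold target_rel_def, blast intro: diff_diff_eq[symmetric])

definition cm :: "('n::finite, 'k::comm_ring_1) tf \<Rightarrow> ('n, 'k) tf \<Rightarrow> bool" where
  "cm a b \<longleftrightarrow> a * b \<approx> b * a"

lemma cm_sym: "cm a b \<Longrightarrow> cm b a" unfolding cm_def by (rule teq_sym)
lemma cm_one[simp]: "cm a 1" unfolding cm_def by simp
lemma cm_mult: assumes "cm a b" "cm a c" shows "cm a (b * c)"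
proof -
  have "a * (b * c) = (a * b) * c" by (simp add: mult.assoc)
  also have "\<dots> \<approx> (b * a) * c" using assms(1) unfolding cm_def by (rule teq_rmult)
  also have "\<dots> = b * (a * c)" by (simp add: mult.assoc)
  also have "\<dots> \<approx> b * (c * a)" using assms(2) unfolding cm_def by (rule teq_lmult)
  finally show ?thesis unfolding cm_def by (simp add: mult.assoc)
qed
lemma cm_power: "cm a b \<Longrightarrow> cm a (b ^ n)"
  by (induction n) (simp_all add: cm_mult)
lemma cm_prod_list: "(\<And>x. x \<in> set xs \<Longrightarrow> cm a x) \<Longrightarrow> cm a (prod_list xs)"
  by (induction xs) (simp_all add: cm_mult)
lemma cm_add: "cm a b \<Longrightarrow> cm a c \<Longrightarrow> cm a (b + c)"
  unfolding cm_def by (simp add: distrib_left distrib_right teq_add)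
lemma cm_scal: "cm a (scal c)"
  unfolding cm_def by (simp add: scal_comm)
lemma cm_of_nat: "cm a (of_nat n)"
  unfolding cm_def by (simp add: mult_of_nat_commute)
lemma cm_refl: "cm a a" unfolding cm_def by simp

lemma cm_lmult_iff: "cm a b \<Longrightarrow> a * b * c \<approx> b * a * c"
  unfolding cm_def by (rule teq_rmult)

lemma idx_list: "distinct (idx_list :: 'n::finite list) \<and> set (idx_list :: 'n list) = UNIV"
proof -
  have "\<exists>xs :: 'n list. distinct xs \<and> set xs = UNIV"
    using finite_distinct_list[of "UNIV :: 'n set"] by auto
  from someI_ex[OF this] show ?thesis unfolding idx_list_def .
qed

definition PP :: "('n::finite \<Rightarrow>\<^sub>0 nat) \<Rightarrow> 'n list \<Rightarrow> ('n, 'k::comm_ring_1) tf" where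
  "PP l xs = prod_list (map (\<lambda>i. X i ^ Poly_Mapping.lookup l i) xs)"

lemma wmono_PP: "wmono l = PP l idx_list" by (simp add: wmono_def PP_def)

lemma PP_Cons: "PP l (i # xs) = X i ^ Poly_Mapping.lookup l i * PP l xs"
  by (simp add: PP_def)

lemma PP_cong: "(\<And>j. j \<in> set xs \<Longrightarrow> Poly_Mapping.lookup l j = Poly_Mapping.lookup l' j) \<Longrightarrow> PP l xs = PP l' xs"
  unfolding PP_def by (metis (no_types, lifting) map_eq_conv)

lemma cm_PP: "(\<And>j. cm a (X j)) \<Longrightarrow> cm a (PP l xs)"
  unfolding PP_def by (rule cm_prod_list) (auto intro: cm_power)

lemma cm_wmono: "(\<And>j. cm a (X j)) \<Longrightarrow> cm a (wmono l)"
  unfolding wmono_PP by (rule cm_PP)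

lemma cm_X_X: "cm (X i) (X j)" unfolding cm_def by (rule T1)
lemma cm_Xpow_PP: "cm (X i ^ n) (PP l xs)"
  by (rule cm_PP, rule cm_sym, rule cm_power, rule cm_X_X)

lemma PP_mult: "PP k xs * PP l xs \<approx> (PP (k + l) xs :: ('n::finite, 'k::comm_ring_1) tf)"
proof (induction xs)
  case Nil then show ?case by (simp add: PP_def)
next
  case (Cons i xs)
  let ?a = "Poly_Mapping.lookup k i" and ?b = "Poly_Mapping.lookup l i"
  have "PP k (i # xs) * PP l (i # xs) = (X i :: ('n, 'k) tf) ^ ?a * (PP k xs * X i ^ ?b) * PP l xs"
    by (simp add: PP_Cons mult.assoc)
  also have "\<dots> \<approx> X i ^ ?a * (X i ^ ?b * PP k xs) * PP l xs"
    using cm_Xpow_PP[of i ?b k xs] unfolding cm_def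
    by (rule teq_rmult[OF teq_lmult[OF teq_sym]])
  also have "\<dots> = X i ^ (?a + ?b) * (PP k xs * PP l xs)"
    by (simp add: power_add mult.assoc)
  also have "\<dots> \<approx> X i ^ (?a + ?b) * PP (k + l) xs"
    using Cons.IH by (rule teq_lmult)
  also have "\<dots> = PP (k + l) (i # xs)"
    by (simp add: PP_Cons lookup_add)
  finally show ?case .
qed

lemma wmono_mult: "wmono k * wmono l \<approx> (wmono (k + l) :: ('n::finite, 'k::comm_ring_1) tf)"
  unfolding wmono_PP by (rule PP_mult)

lemma prod_list_map_1: "(\<Prod>i\<leftarrow>xs. (1::'a::monoid_mult)) = 1"
  by (induction xs) simp_all

lemma wmono_zero[simp]: "wmono 0 = 1"
  by (simp add: wmono_def prod_list_map_1)

lemma cm_X_wmono: "cm (X j) (wmono l)"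
  by (rule cm_wmono, rule cm_X_X)
lemma cm_LL_wmono: "cm (LL a) (wmono l)"
  by (rule cm_wmono, rule cm_sym, unfold cm_def, rule T7)
lemma cm_wmono_wmono: "cm (wmono k) (wmono l)"
  by (rule cm_wmono, rule cm_sym, rule cm_X_wmono)
lemma cm_LL_DD: "cm (LL a) (DD i)"
  by (rule cm_sym, unfold cm_def, rule T8)

lemma DD_Xpow: "DD p * X j ^ n \<approx> X j ^ n * DD p + (if p = j then of_nat n * X j ^ (n - 1) else (0 :: ('n::finite, 'k::comm_ring_1) tf))"
proof (induction n)
  case 0 then show ?case by simp
next
  case (Suc n)
  let ?d = "(if p = j then 1 else 0) :: ('n, 'k) tf"
  have "DD p * X j ^ Suc n = (DD p * X j) * (X j ^ n :: ('n, 'k) tf)" by (simp add: mult.assoc)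
  also have "\<dots> \<approx> (X j * DD p + ?d) * X j ^ n" by (rule teq_rmult, rule T3)
  also have "\<dots> = X j * (DD p * X j ^ n) + ?d * X j ^ n" by (simp add: distrib_right mult.assoc)
  also have "\<dots> \<approx> X j * (X j ^ n * DD p + (if p = j then of_nat n * X j ^ (n - 1) else 0)) + ?d * X j ^ n"
    by (intro teq_add teq_lmult Suc.IH teq_refl)
  also have "\<dots> = X j ^ Suc n * DD p + (if p = j then of_nat (Suc n) * X j ^ (Suc n - 1) else 0)"
  proof (cases "p = j")
    case True
    have "X j * (of_nat n * X j ^ (n - 1)) = of_nat n * (X j ^ n :: ('n, 'k) tf)"
    proof -
      have c: "X j * (of_nat n * Y) = of_nat n * (X j * Y)" for Y :: "('n, 'k) tf"
        by (metis mult.assoc mult_of_nat_commute)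
      show ?thesis using c[of "X j ^ (n - 1)"] by (cases n) simp_all
    qed
    then show ?thesis using True by (simp add: distrib_left distrib_right mult.assoc)
  qed (simp add: mult.assoc)
  finally show ?case .
qed

lemma DD_PP: "distinct xs \<Longrightarrow> DD p * PP l xs \<approx> PP l xs * DD p
   + (if p \<in> set xs then of_nat (Poly_Mapping.lookup l p) * PP (l - Poly_Mapping.single p 1) xs else (0 :: ('n::finite, 'k::comm_ring_1) tf))"
proof (induction xs)
  case Nil then show ?case by (simp add: PP_def)
next
  case (Cons i xs)
  let ?a = "Poly_Mapping.lookup l i"
  let ?l' = "l - Poly_Mapping.single p 1"
  let ?Q = "PP l xs"
  have dxs: "distinct xs" "i \<notin> set xs" using Cons.prems by auto
  have "DD p * PP l (i # xs) = (DD p * X i ^ ?a) * (?Q :: ('n, 'k) tf)" by (simp add: PP_Cons mult.assoc)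
  also have "\<dots> \<approx> (X i ^ ?a * DD p + (if p = i then of_nat ?a * X i ^ (?a - 1) else 0)) * ?Q"
    by (rule teq_rmult, rule DD_Xpow)
  also have "\<dots> = X i ^ ?a * (DD p * ?Q) + (if p = i then of_nat ?a * X i ^ (?a - 1) else 0) * ?Q"
    by (simp add: distrib_right mult.assoc)
  also have "\<dots> \<approx> X i ^ ?a * (?Q * DD p + (if p \<in> set xs then of_nat (Poly_Mapping.lookup l p) * PP ?l' xs else 0))
       + (if p = i then of_nat ?a * X i ^ (?a - 1) else 0) * ?Q"
    by (intro teq_add teq_lmult Cons.IH dxs teq_refl)
  also have "\<dots> = PP l (i # xs) * DD p
   + (if p \<in> set (i # xs) then of_nat (Poly_Mapping.lookup l p) * PP ?l' (i # xs) else 0)"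
  proof (cases "p = i")
    case True
    then have "p \<notin> set xs" using dxs by auto
    moreover have "PP ?l' xs = (?Q :: ('n, 'k) tf)" using \<open>p \<notin> set xs\<close>
      by (intro PP_cong) (auto simp: lookup_minus lookup_single when_def)
    moreover have "Poly_Mapping.lookup ?l' i = ?a - 1" using True by (simp add: lookup_minus)
    ultimately show ?thesis using True
      by (simp add: PP_Cons distrib_left mult.assoc)
  next
    case False
    have "Poly_Mapping.lookup ?l' i = ?a" using False by (simp add: lookup_minus lookup_single when_def)
    then show ?thesis using False
      by (simp add: PP_Cons distrib_left mult.assoc mult_of_nat_commute mult.left_commute)
  qed
  finally show ?case .
qed

lemma DD_wmono: "DD p * wmono l \<approx> wmono l * DD p + of_nat (Poly_Mapping.lookup l p) * (wmono (l - Poly_Mapping.single p 1) :: ('n::finite, 'k::comm_ring_1) tf)"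
  using DD_PP[of idx_list p l] idx_list[where 'n='n] by (simp add: wmono_PP)

lemma additive_sum:
  fixes A :: "'a::comm_monoid_add \<Rightarrow> 'b::ab_group_add"
  assumes add: "\<And>a b. A (a + b) = A a + A b"
  shows "A (sum f S) = (\<Sum>s\<in>S. A (f s))"
proof -
  have A0: "A 0 = 0" using add[of 0 0] by simp
  show ?thesis by (induction S rule: infinite_finite_induct) (simp_all add: A0 add)
qed

lemma additive_expand:
  fixes A :: "('a \<Rightarrow>\<^sub>0 'c::comm_ring_1) \<Rightarrow> 'b::ab_group_add"
  assumes add: "\<And>a b. A (a + b) = A a + A b"
  shows "A f = (\<Sum>k\<in>Poly_Mapping.keys f. A (Poly_Mapping.single k (Poly_Mapping.lookup f k)))"
  by (subst mono_expand[of f]) (rule additive_sum[OF add])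

definition vmon :: "'n \<Rightarrow> ('n \<Rightarrow>\<^sub>0 nat) \<Rightarrow> 'k \<Rightarrow> ('n, 'k::comm_ring_1) vfield" where
  "vmon p k c = (\<lambda>r. if r = p then Poly_Mapping.single k c else 0)"

lemma vmon_apply: "vmon p k c r = (if r = p then Poly_Mapping.single k c else 0)"
  by (simp add: vmon_def)

definition KK :: "('n::finite, 'k::comm_ring_1) vfield \<Rightarrow> ('n \<Rightarrow>\<^sub>0 nat) set" where
  "KK \<eta> = (\<Union>p. Poly_Mapping.keys (\<eta> p))"

lemma finite_KK: "finite (KK \<eta>)" by (simp add: KK_def)

lemma mono_expand_superset:
  assumes "finite S" "Poly_Mapping.keys f \<subseteq> S"
  shows "f = (\<Sum>k\<in>S. Poly_Mapping.single k (Poly_Mapping.lookup f k))"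
proof -
  have "f = (\<Sum>k\<in>Poly_Mapping.keys f. Poly_Mapping.single k (Poly_Mapping.lookup f k))" by (rule mono_expand)
  also have "\<dots> = (\<Sum>k\<in>S. Poly_Mapping.single k (Poly_Mapping.lookup f k))"
    by (rule sum.mono_neutral_left[OF assms]) (auto simp: in_keys_iff)
  finally show ?thesis .
qed

lemma vexpand:
  fixes \<eta> :: "('n::finite, 'k::comm_ring_1) vfield"
  shows "\<eta> = (\<lambda>r. \<Sum>s\<in>UNIV \<times> KK \<eta>. vmon (fst s) (snd s) (Poly_Mapping.lookup (\<eta> (fst s)) (snd s)) r)"
proof
  fix r
  have "(\<Sum>s\<in>UNIV \<times> KK \<eta>. vmon (fst s) (snd s) (Poly_Mapping.lookup (\<eta> (fst s)) (snd s)) r)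
      = (\<Sum>p\<in>UNIV. \<Sum>k\<in>KK \<eta>. vmon p k (Poly_Mapping.lookup (\<eta> p) k) r)"
    by (simp add: sum.cartesian_product case_prod_beta')
  also have "\<dots> = (\<Sum>k\<in>KK \<eta>. Poly_Mapping.single k (Poly_Mapping.lookup (\<eta> r) k))"
  proof -
    have "(\<Sum>p\<in>UNIV. \<Sum>k\<in>KK \<eta>. vmon p k (Poly_Mapping.lookup (\<eta> p) k) r)
       = (\<Sum>p\<in>UNIV. if p = r then (\<Sum>k\<in>KK \<eta>. Poly_Mapping.single k (Poly_Mapping.lookup (\<eta> r) k)) else 0)"
      by (rule sum.cong) (auto simp: vmon_apply)
    then show ?thesis by simp
  qed
  also have "\<dots> = \<eta> r"
    by (rule mono_expand_superset[symmetric]) (auto simp: finite_KK KK_def)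
  finally show "\<eta> r = (\<Sum>s\<in>UNIV \<times> KK \<eta>. vmon (fst s) (snd s) (Poly_Mapping.lookup (\<eta> (fst s)) (snd s)) r)" ..
qed

lemma vadditive_sum:
  fixes V :: "('n, 'k::comm_ring_1) vfield \<Rightarrow> 'b::ab_group_add"
  assumes add: "\<And>a b. V (\<lambda>r. a r + b r) = V a + V b"
  shows "V (\<lambda>r. \<Sum>s\<in>S. G s r) = (\<Sum>s\<in>S. V (G s))"
proof -
  have V0: "V (\<lambda>r. 0) = 0" using add[of "\<lambda>r. 0" "\<lambda>r. 0"] by simp
  show ?thesis
  proof (induction S rule: infinite_finite_induct)
    case (infinite A) then show ?case by (simp add: V0)
  next
    case empty then show ?case by (simp add: V0)
  next
    case (insert x T)
    then show ?case using add[of "G x" "\<lambda>r. \<Sum>s\<in>T. G s r"] by simp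
  qed
qed

lemma vadditive_expand:
  fixes V :: "('n::finite, 'k::comm_ring_1) vfield \<Rightarrow> 'b::ab_group_add"
  assumes add: "\<And>a b. V (\<lambda>r. a r + b r) = V a + V b"
  shows "V \<eta> = (\<Sum>s\<in>UNIV \<times> KK \<eta>. V (vmon (fst s) (snd s) (Poly_Mapping.lookup (\<eta> (fst s)) (snd s))))"
  by (subst vexpand[of \<eta>]) (rule vadditive_sum[OF add])

abbreviation ep :: "'n \<Rightarrow> 'n \<Rightarrow>\<^sub>0 nat" where "ep p \<equiv> Poly_Mapping.single p 1"

lemma pd_superset:
  assumes "finite S" "Poly_Mapping.keys f \<subseteq> S"
  shows "pd i f = (\<Sum>e\<in>S. Poly_Mapping.single (e - ep i) (of_nat (Poly_Mapping.lookup e i) * Poly_Mapping.lookup f e))"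
  unfolding pd_def
  by (rule sum.mono_neutral_left[OF assms]) (auto simp: in_keys_iff)

lemma pd_add: "pd i (f + g) = pd i f + pd i (g :: ('n, 'k::comm_ring_1) mpoly)"
proof -
  let ?S = "Poly_Mapping.keys f \<union> Poly_Mapping.keys g"
  show ?thesis
    by (subst (1 2 3) pd_superset[of ?S]) (auto simp: keys_add lookup_add distrib_left single_add sum.distrib)
qed

lemma pd_single: "pd i (Poly_Mapping.single l c) = Poly_Mapping.single (l - ep i) (of_nat (Poly_Mapping.lookup l i) * (c :: 'k::comm_ring_1))"
  by (cases "c = 0") (simp_all add: pd_def)

lemma act_add1: "act (\<lambda>r. a r + b r) g = act a g + act b g"
  by (simp add: act_def distrib_right sum.distrib)

lemma act_add2: "act \<eta> (f + g) = act \<eta> f + act \<eta> g"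
  by (simp add: act_def pd_add distrib_left sum.distrib)


lemma if_zero_mult: "(if b then x else 0) * y = (if b then x * y else (0::'a::semiring_0))"
  by simp

lemma pd_zero[simp]: "pd i 0 = 0" by (simp add: pd_def)

lemma act_vmon: "act (vmon p k c) g = Poly_Mapping.single k c * pd p g"
  by (simp add: act_def vmon_apply if_zero_mult)

lemma act_vmon_single: "act (vmon p k c) (Poly_Mapping.single l d)
   = Poly_Mapping.single (k + (l - ep p)) (c * (of_nat (Poly_Mapping.lookup l p) * d))"
  by (simp add: act_vmon pd_single mult_single)

lemma lie_add1: "lie (\<lambda>r. a r + b r) \<xi> = (\<lambda>r. lie a \<xi> r + lie b \<xi> r)"
  by (simp add: lie_def act_add1 act_add2 fun_eq_iff algebra_simps)

lemma lie_add2: "lie \<xi> (\<lambda>r. a r + b r) = (\<lambda>r. lie \<xi> a r + lie \<xi> b r)"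
  by (simp add: lie_def act_add1 act_add2 fun_eq_iff algebra_simps)

lemma lie_vmon: "lie (vmon p k c) (vmon q l d) = (\<lambda>r.
     (if r = q then Poly_Mapping.single (k + (l - ep p)) (c * (of_nat (Poly_Mapping.lookup l p) * d)) else 0)
   - (if r = p then Poly_Mapping.single (l + (k - ep q)) (d * (of_nat (Poly_Mapping.lookup k q) * c)) else 0))"
  by (rule ext) (simp add: lie_def act_vmon vmon_apply pd_single mult_single)

lemma vfm_vmon: "vfm k p = vmon p k 1" by (simp add: vfm_def vmon_def fun_eq_iff)

definition lin :: "(('n::finite \<Rightarrow>\<^sub>0 nat) \<Rightarrow> ('n, 'k::comm_ring_1) tf) \<Rightarrow> ('n, 'k) mpoly \<Rightarrow> ('n, 'k) tf" where
  "lin T f = (\<Sum>k\<in>Poly_Mapping.keys f. scal (Poly_Mapping.lookup f k) * T k)"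

lemma embA_lin: "embA f = lin wmono f" by (simp add: embA_def lin_def)

lemma lin_superset:
  assumes "finite S" "Poly_Mapping.keys f \<subseteq> S"
  shows "lin T f = (\<Sum>k\<in>S. scal (Poly_Mapping.lookup f k) * T k)"
  unfolding lin_def by (rule sum.mono_neutral_left[OF assms]) (auto simp: in_keys_iff)

lemma lin_add: "lin T (f + g) = lin T f + lin T g"
proof -
  let ?S = "Poly_Mapping.keys f \<union> Poly_Mapping.keys g"
  show ?thesis
    by (subst (1 2 3) lin_superset[of ?S]) (auto simp: keys_add lookup_add scal_add distrib_right sum.distrib)
qed

lemma lin_zero[simp]: "lin T 0 = 0" by (simp add: lin_def)

lemma lin_single: "lin T (Poly_Mapping.single k c) = scal c * T k"
  by (cases "c = 0") (simp_all add: lin_def)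

lemma lin_diff: "lin T (f - g) = lin T f - lin T g"
  using lin_add[of T "f - g" g] by simp

lemma lin_if: "lin T (if b then f else 0) = (if b then lin T f else 0)"
  by simp

lemma smult_mp_expand: "smult_mp c f = (\<Sum>k\<in>Poly_Mapping.keys f. Poly_Mapping.single k (c * Poly_Mapping.lookup f k))"
  unfolding smult_mp_def by (subst (1) mono_expand[of f]) (simp add: sum_distrib_left mult_single)

lemma lin_smult: "lin T (smult_mp c f) = scal c * lin T f"
proof -
  have "lin T (smult_mp c f) = (\<Sum>k\<in>Poly_Mapping.keys f. lin T (Poly_Mapping.single k (c * Poly_Mapping.lookup f k)))"
    unfolding smult_mp_expand by (rule additive_sum, rule lin_add)
  also have "\<dots> = scal c * lin T f"
    by (simp add: lin_single scal_mult sum_distrib_left mult.assoc lin_def[of T f])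
  finally show ?thesis .
qed

definition vimg :: "('n::finite, 'k::comm_ring_1) vfield \<Rightarrow> ('n, 'k) tf" where
  "vimg \<eta> = (\<Sum>p\<in>UNIV. lin (\<lambda>k. phiV k p) (\<eta> p))"

lemma vimg_add: "vimg (\<lambda>r. a r + b r) = vimg a + vimg b"
  by (simp add: vimg_def lin_add sum.distrib)

lemma vimg_smult: "vimg (smult_vf c \<eta>) = scal c * vimg \<eta>"
  by (simp add: vimg_def smult_vf_def lin_smult sum_distrib_left)

lemma vimg_vmon: "vimg (vmon p k c) = scal c * phiV k p"
  by (simp add: vimg_def vmon_apply lin_single if_distrib[of "lin _"] cong: if_cong)

lemma vimg_vfm: "vimg (vfm k p) = phiV k p"
  by (simp add: vfm_vmon vimg_vmon)

lemma vimg_lie_form: "vimg (\<lambda>r. (if r = q then Poly_Mapping.single A a else 0) - (if r = p then Poly_Mapping.single B b else 0))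
   = scal a * phiV A q - scal b * phiV B p"
  by (simp add: vimg_def lin_diff lin_single if_distrib[of "lin _"] sum_subtractf cong: if_cong)

definition Box :: "('n::finite \<Rightarrow>\<^sub>0 nat) \<Rightarrow> ('n \<Rightarrow>\<^sub>0 nat) set" where
  "Box J = {m. \<forall>i. Poly_Mapping.lookup m i \<le> Poly_Mapping.lookup J i}"

definition MM :: "('n::finite \<Rightarrow>\<^sub>0 nat) \<Rightarrow> ('n \<Rightarrow>\<^sub>0 nat) set" where
  "MM k = {m. m \<noteq> 0 \<and> (\<forall>i. Poly_Mapping.lookup m i \<le> Poly_Mapping.lookup k i)}"

lemma inj_lookup: "inj Poly_Mapping.lookup"
  by (rule injI) (simp add: poly_mapping_eqI)

lemma lookup_Box: "Poly_Mapping.lookup ` Box J = PiE UNIV (\<lambda>i. {..Poly_Mapping.lookup J i})"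
proof
  show "Poly_Mapping.lookup ` Box J \<subseteq> PiE UNIV (\<lambda>i. {..Poly_Mapping.lookup J i})"
    by (auto simp: Box_def)
  show "PiE UNIV (\<lambda>i. {..Poly_Mapping.lookup J i}) \<subseteq> Poly_Mapping.lookup ` Box J"
  proof
    fix g assume g: "g \<in> PiE UNIV (\<lambda>i. {..Poly_Mapping.lookup J i})"
    have "finite {i. g i \<noteq> 0}" by simp
    then have "Poly_Mapping.lookup (Abs_poly_mapping g) = g" by simp
    moreover have "Abs_poly_mapping g \<in> Box J" using g \<open>_ = g\<close> by (auto simp: Box_def)
    ultimately show "g \<in> Poly_Mapping.lookup ` Box J" by (metis image_eqI)
  qed
qed

lemma finite_Box: "finite (Box J)"
proof -
  have "finite (Poly_Mapping.lookup ` Box J)" unfolding lookup_Box by (rule finite_PiE) auto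
  then show ?thesis using inj_lookup by (metis finite_imageD inj_on_subset subset_UNIV)
qed

lemma MM_Box: "MM k \<subseteq> Box k" by (auto simp: MM_def Box_def)

lemma finite_MM: "finite (MM k)" using finite_Box MM_Box finite_subset by blast

lemma sum_Box_prod:
  fixes f :: "'n::finite \<Rightarrow> nat \<Rightarrow> 'c::comm_semiring_1"
  shows "(\<Sum>m\<in>Box J. \<Prod>i\<in>UNIV. f i (Poly_Mapping.lookup m i)) = (\<Prod>i\<in>UNIV. \<Sum>a\<le>Poly_Mapping.lookup J i. f i a)"
proof -
  have "(\<Sum>m\<in>Box J. \<Prod>i\<in>UNIV. f i (Poly_Mapping.lookup m i))
      = (\<Sum>g\<in>Poly_Mapping.lookup ` Box J. \<Prod>i\<in>UNIV. f i (g i))"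
    by (rule sum.reindex[symmetric, unfolded comp_def]) (meson inj_lookup inj_on_subset subset_UNIV)
  also have "\<dots> = (\<Prod>i\<in>UNIV. \<Sum>a\<le>Poly_Mapping.lookup J i. f i a)"
    unfolding lookup_Box by (rule prod_sum_PiE[symmetric]) auto
  finally show ?thesis .
qed

lemma mchoose_eq_0: "\<not> (\<forall>i. Poly_Mapping.lookup m i \<le> Poly_Mapping.lookup k i) \<Longrightarrow> mchoose k m = 0"
  unfolding mchoose_def by (auto simp: not_le)

lemma mchoose_zero[simp]: "mchoose k 0 = 1"
  by (simp add: mchoose_def)

lemma V2: "(\<Sum>a\<le>Suc n. (x choose a) * (y choose (Suc n - a)) * (Suc n - a)) = y * ((x + (y - 1)) choose n)"
proof -
  have "(\<Sum>a\<le>Suc n. (x choose a) * (y choose (Suc n - a)) * (Suc n - a))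
      = (\<Sum>a\<le>n. (x choose a) * (y choose (Suc n - a)) * (Suc n - a))"
    by simp
  also have "\<dots> = (\<Sum>a\<le>n. y * ((x choose a) * ((y - 1) choose (n - a))))"
  proof (rule sum.cong)
    fix a assume "a \<in> {..n}"
    then have "Suc n - a > 0" "Suc n - a - 1 = n - a" by auto
    then have "(Suc n - a) * (y choose (Suc n - a)) = y * ((y - 1) choose (n - a))"
      using times_binomial_minus1_eq[of "Suc n - a" y] by simp
    then show "(x choose a) * (y choose (Suc n - a)) * (Suc n - a) = y * ((x choose a) * ((y - 1) choose (n - a)))"
      by (metis mult.commute mult.left_commute)
  qed simp
  also have "\<dots> = y * ((x + (y - 1)) choose n)"
    by (simp add: sum_distrib_left[symmetric] vandermonde)
  finally show ?thesis .
qed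

lemma Suc_choose_shift: "Suc a * (n choose Suc a) = (n - a) * (n choose a)"
  using binomial_absorption[of a n] binomial_absorb_comp[of n a] by simp

lemma prod_split_at:
  fixes f :: "'n::finite \<Rightarrow> 'c::comm_monoid_mult"
  shows "(\<Prod>i\<in>UNIV. f i) = f p * (\<Prod>i\<in>UNIV - {p}. f i)"
  by (simp add: prod.remove)

lemma coeff_identity:
  fixes k l j :: "'n::finite \<Rightarrow>\<^sub>0 nat"
  shows "mchoose l j * (Poly_Mapping.lookup l p - Poly_Mapping.lookup j p)
    + (\<Sum>s\<in>{s\<in>MM k \<times> MM l. 0 < Poly_Mapping.lookup (snd s) p \<and> fst s + (snd s - Poly_Mapping.single p 1) = j}.
          mchoose k (fst s) * mchoose l (snd s) * Poly_Mapping.lookup (snd s) p)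
    = Poly_Mapping.lookup l p * mchoose (k + (l - Poly_Mapping.single p 1)) j"
proof -
  define J where "J = j + Poly_Mapping.single p 1"
  define g where "g m = mchoose k m * mchoose l (J - m) * Poly_Mapping.lookup (J - m) p" for m
  define A where "A = {m \<in> Box J. m \<in> MM k \<and> J - m \<in> MM l \<and> 0 < Poly_Mapping.lookup (J - m) p}"
  let ?F = "{s\<in>MM k \<times> MM l. 0 < Poly_Mapping.lookup (snd s) p \<and> fst s + (snd s - Poly_Mapping.single p 1) = j}"
  have lJ: "Poly_Mapping.lookup J i = Poly_Mapping.lookup j i + (if i = p then 1 else 0)" for i
    by (simp add: J_def lookup_add lookup_single when_def)
  have F_eq: "?F = (\<lambda>m. (m, J - m)) ` A"
  proof (rule equalityI; rule subsetI)
    fix s assume s: "s \<in> ?F"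
    obtain m m' where s_eq: "s = (m, m')" by (cases s)
    have pos: "0 < Poly_Mapping.lookup m' p" and eq: "m + (m' - Poly_Mapping.single p 1) = j"
      using s s_eq by auto
    have eqi: "Poly_Mapping.lookup m i + (Poly_Mapping.lookup m' i - (if i = p then 1 else 0)) = Poly_Mapping.lookup j i" for i
      using arg_cong[OF eq, of "\<lambda>x. Poly_Mapping.lookup x i"] by (auto simp: lookup_add lookup_minus lookup_single when_def split: if_splits)
    have m': "m' = J - m"
    proof (rule poly_mapping_eqI)
      fix i show "Poly_Mapping.lookup m' i = Poly_Mapping.lookup (J - m) i"
        using eqi[of i] pos lJ[of i] by (cases "i = p") (auto simp: lookup_minus)
    qed
    have "Poly_Mapping.lookup m i \<le> Poly_Mapping.lookup J i" for i
      using eqi[of i] lJ[of i] by (cases "i = p") auto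
    then have "m \<in> Box J" unfolding Box_def by auto
    then show "s \<in> (\<lambda>m. (m, J - m)) ` A" using s s_eq m' unfolding A_def by auto
  next
    fix s assume "s \<in> (\<lambda>m. (m, J - m)) ` A"
    then obtain m where m: "m \<in> A" and s_eq: "s = (m, J - m)" by auto
    have box: "Poly_Mapping.lookup m i \<le> Poly_Mapping.lookup J i" for i using m unfolding A_def Box_def by auto
    have pos: "0 < Poly_Mapping.lookup (J - m) p" using m unfolding A_def by auto
    have "m + ((J - m) - Poly_Mapping.single p 1) = j"
    proof (rule poly_mapping_eqI)
      fix i show "Poly_Mapping.lookup (m + ((J - m) - Poly_Mapping.single p 1)) i = Poly_Mapping.lookup j i"
        using box[of i] pos lJ[of i] lJ[of p] by (cases "i = p") (auto simp: lookup_add lookup_minus lookup_single when_def)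
    qed
    then show "s \<in> ?F" using m s_eq unfolding A_def by auto
  qed
  have inj: "inj_on (\<lambda>m. (m, J - m)) A" by (rule inj_onI) simp
  have "(\<Sum>s\<in>?F. mchoose k (fst s) * mchoose l (snd s) * Poly_Mapping.lookup (snd s) p) = (\<Sum>m\<in>A. g m)"
    unfolding F_eq by (subst sum.reindex[OF inj]) (simp add: g_def)
  also have "\<dots> = (\<Sum>m\<in>Box J - {0}. g m)"
  proof (rule sum.mono_neutral_left)
    show "finite (Box J - {0})" using finite_Box by simp
    show "A \<subseteq> Box J - {0}" unfolding A_def MM_def by auto
    show "\<forall>m\<in>Box J - {0} - A. g m = 0"
    proof
      fix m assume m: "m \<in> Box J - {0} - A"
      show "g m = 0"
      proof (cases "\<forall>i. Poly_Mapping.lookup m i \<le> Poly_Mapping.lookup k i")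
        case False then show ?thesis by (simp add: g_def mchoose_eq_0)
      next
        case mk: True
        show ?thesis
        proof (cases "\<forall>i. Poly_Mapping.lookup (J - m) i \<le> Poly_Mapping.lookup l i")
          case False then show ?thesis by (simp add: g_def mchoose_eq_0)
        next
          case True
          then have "J - m = 0 \<or> Poly_Mapping.lookup (J - m) p = 0" using m mk unfolding A_def MM_def by auto
          then show ?thesis by (auto simp: g_def)
        qed
      qed
    qed
  qed
  finally have fib: "(\<Sum>s\<in>?F. mchoose k (fst s) * mchoose l (snd s) * Poly_Mapping.lookup (snd s) p) = (\<Sum>m\<in>Box J - {0}. g m)" .
  have g0: "g 0 = mchoose l j * (Poly_Mapping.lookup l p - Poly_Mapping.lookup j p)"
  proof -
    have R: "(\<Prod>i\<in>UNIV - {p}. Poly_Mapping.lookup l i choose Poly_Mapping.lookup J i)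
        = (\<Prod>i\<in>UNIV - {p}. Poly_Mapping.lookup l i choose Poly_Mapping.lookup j i)"
      by (rule prod.cong) (auto simp: lJ)
    have "g 0 = (Poly_Mapping.lookup l p choose Suc (Poly_Mapping.lookup j p)) * Suc (Poly_Mapping.lookup j p)
         * (\<Prod>i\<in>UNIV - {p}. Poly_Mapping.lookup l i choose Poly_Mapping.lookup j i)"
      unfolding g_def mchoose_def using R lJ[of p] by (simp add: prod_split_at[of _ p] algebra_simps)
    also have "\<dots> = mchoose l j * (Poly_Mapping.lookup l p - Poly_Mapping.lookup j p)"
      unfolding mchoose_def prod_split_at[of _ p]
      using Suc_choose_shift[of "Poly_Mapping.lookup j p" "Poly_Mapping.lookup l p"] by (simp add: ac_simps)
    finally show ?thesis .
  qed
  have zB: "0 \<in> Box J" by (simp add: Box_def)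
  have "mchoose l j * (Poly_Mapping.lookup l p - Poly_Mapping.lookup j p) + (\<Sum>m\<in>Box J - {0}. g m) = (\<Sum>m\<in>Box J. g m)"
    using sum.remove[OF finite_Box zB, of g] g0 by simp
  also have "\<dots> = (\<Sum>m\<in>Box J. \<Prod>i\<in>UNIV. (Poly_Mapping.lookup k i choose Poly_Mapping.lookup m i)
        * (Poly_Mapping.lookup l i choose (Poly_Mapping.lookup J i - Poly_Mapping.lookup m i))
        * (if i = p then Poly_Mapping.lookup J i - Poly_Mapping.lookup m i else 1))"
    by (rule sum.cong) (simp_all add: g_def mchoose_def prod.distrib lookup_minus)
  also have "\<dots> = (\<Prod>i\<in>UNIV. \<Sum>a\<le>Poly_Mapping.lookup J i. (Poly_Mapping.lookup k i choose a)
        * (Poly_Mapping.lookup l i choose (Poly_Mapping.lookup J i - a))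
        * (if i = p then Poly_Mapping.lookup J i - a else 1))"
    by (rule sum_Box_prod)
  also have "\<dots> = (\<Prod>i\<in>UNIV. (if i = p then Poly_Mapping.lookup l p else 1)
        * (Poly_Mapping.lookup (k + (l - Poly_Mapping.single p 1)) i choose Poly_Mapping.lookup j i))"
  proof (rule prod.cong)
    fix i
    show "(\<Sum>a\<le>Poly_Mapping.lookup J i. (Poly_Mapping.lookup k i choose a)
        * (Poly_Mapping.lookup l i choose (Poly_Mapping.lookup J i - a))
        * (if i = p then Poly_Mapping.lookup J i - a else 1))
      = (if i = p then Poly_Mapping.lookup l p else 1)
        * (Poly_Mapping.lookup (k + (l - Poly_Mapping.single p 1)) i choose Poly_Mapping.lookup j i)"
    proof (cases "i = p")
      case True
      then show ?thesis using V2[of "Poly_Mapping.lookup k p" "Poly_Mapping.lookup l p" "Poly_Mapping.lookup j p"]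
        by (simp add: lJ lookup_add lookup_minus)
    next
      case False
      then show ?thesis using vandermonde[of "Poly_Mapping.lookup k i" "Poly_Mapping.lookup l i" "Poly_Mapping.lookup j i"]
        by (simp add: lJ lookup_add lookup_minus lookup_single when_def)
    qed
  qed simp
  also have "\<dots> = Poly_Mapping.lookup l p * mchoose (k + (l - Poly_Mapping.single p 1)) j"
    by (simp add: prod.distrib mchoose_def)
  finally show ?thesis using fib by simp
qed

abbreviation LV :: "('n::finite \<Rightarrow>\<^sub>0 nat) \<Rightarrow> 'n \<Rightarrow> ('n, 'k::comm_ring_1) tf" where
  "LV m p \<equiv> LL (Abs_lp (vfm m p))"

definition SS :: "('n::finite \<Rightarrow>\<^sub>0 nat) \<Rightarrow> 'n \<Rightarrow> ('n, 'k::comm_ring_1) tf" where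
  "SS k p = (\<Sum>m\<in>MM k. of_nat (mchoose k m) * (wmono (k - m) * LV m p))"

lemma phiV_split: "phiV k p = wmono k * DD p + SS k p"
  by (simp add: phiV_def SS_def MM_def mult.assoc)

definition br :: "('n::finite, 'k::comm_ring_1) tf \<Rightarrow> ('n, 'k) tf \<Rightarrow> ('n, 'k) tf" where
  "br a b = a * b - b * a"

lemma br_zero[simp]: "br a 0 = 0" "br 0 a = 0" by (simp_all add: br_def)
lemma cm_zero[simp]: "cm a 0" by (simp add: cm_def)
lemma br_add_left: "br (a + b) c = br a c + br b c" by (simp add: br_def algebra_simps)
lemma br_add_right: "br a (b + c) = br a b + br a c" by (simp add: br_def algebra_simps)
lemma br_antisym: "br a b = - br b a" by (simp add: br_def)
lemma br_sum_right: "br a (sum f A) = (\<Sum>i\<in>A. br a (f i))"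
  by (induction A rule: infinite_finite_induct) (simp_all add: br_add_right)
lemma br_sum_left: "br (sum f A) a = (\<Sum>i\<in>A. br (f i) a)"
  by (induction A rule: infinite_finite_induct) (simp_all add: br_add_left)
lemma nat_comm_assoc: "a * (of_nat c * b) = of_nat c * (a * b :: 'a::ring_1)"
  by (metis mult.assoc mult_of_nat_commute)
lemma br_nat_right: "br a (of_nat c * b) = of_nat c * br a b"
  by (simp add: br_def right_diff_distrib nat_comm_assoc mult.assoc)
lemma br_nat_left: "br (of_nat c * a) b = of_nat c * br a b"
  by (simp add: br_def right_diff_distrib nat_comm_assoc mult.assoc)
lemma br_cm: "cm a b \<Longrightarrow> br a b \<approx> 0"
  unfolding cm_def br_def using teq_iff_diff by blast

lemma cm_sum: "(\<And>i. i \<in> A \<Longrightarrow> cm a (f i)) \<Longrightarrow> cm a (sum f A)"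
  by (induction A rule: infinite_finite_induct) (simp_all add: cm_add)

lemma cm_wmono_SS: "cm (wmono l) (SS k p)"
  unfolding SS_def
  by (intro cm_sum cm_mult cm_of_nat cm_wmono_wmono cm_sym[OF cm_LL_wmono])

lemma core8: "br (phiV k p) (wmono l) \<approx> of_nat (Poly_Mapping.lookup l p) * (wmono (k + (l - ep p)) :: ('n::finite, 'k::comm_ring_1) tf)"
proof -
  have "br (wmono k * DD p) (wmono l) = wmono k * (DD p * wmono l) - wmono l * wmono k * (DD p :: ('n, 'k) tf)"
    by (simp add: br_def mult.assoc)
  also have "\<dots> \<approx> wmono k * (wmono l * DD p + of_nat (Poly_Mapping.lookup l p) * wmono (l - ep p)) - wmono l * wmono k * DD p"
    by (intro teq_diff teq_lmult DD_wmono teq_refl)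
  also have "\<dots> = (wmono k * wmono l - wmono l * wmono k) * DD p + of_nat (Poly_Mapping.lookup l p) * (wmono k * wmono (l - ep p))"
    by (simp add: distrib_left left_diff_distrib nat_comm_assoc mult.assoc)
  also have "\<dots> \<approx> 0 * DD p + of_nat (Poly_Mapping.lookup l p) * wmono (k + (l - ep p))"
    using cm_wmono_wmono[of k l] unfolding cm_def teq_iff_diff[of "wmono k * wmono l"]
    by (intro teq_add teq_rmult teq_lmult wmono_mult)
  finally have A: "br (wmono k * DD p) (wmono l) \<approx> of_nat (Poly_Mapping.lookup l p) * (wmono (k + (l - ep p)) :: ('n, 'k) tf)" by simp
  have B: "br (SS k p) (wmono l) \<approx> (0 :: ('n, 'k) tf)"
    by (rule br_cm, rule cm_sym, rule cm_wmono_SS)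
  show ?thesis unfolding phiV_split br_add_left using teq_add[OF A B] by simp
qed

lemma AD: "wmono k * DD p * wmono a * Y \<approx> wmono (k + a) * DD p * Y
   + of_nat (Poly_Mapping.lookup a p) * (wmono (k + (a - ep p)) * (Y :: ('n::finite, 'k::comm_ring_1) tf))"
proof -
  have "wmono k * DD p * wmono a * Y = wmono k * (DD p * wmono a) * (Y :: ('n, 'k) tf)" by (simp add: mult.assoc)
  also have "\<dots> \<approx> wmono k * (wmono a * DD p + of_nat (Poly_Mapping.lookup a p) * wmono (a - ep p)) * Y"
    by (rule teq_rmult[OF teq_lmult[OF DD_wmono]])
  also have "\<dots> = (wmono k * wmono a) * DD p * Y + of_nat (Poly_Mapping.lookup a p) * ((wmono k * wmono (a - ep p)) * Y)"
    by (simp add: distrib_left distrib_right nat_comm_assoc mult.assoc)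
  also have "\<dots> \<approx> wmono (k + a) * DD p * Y + of_nat (Poly_Mapping.lookup a p) * (wmono (k + (a - ep p)) * Y)"
    by (rule teq_add[OF teq_rmult[OF teq_rmult[OF wmono_mult]] teq_lmult[OF teq_rmult[OF wmono_mult]]])
  finally show ?thesis .
qed

lemma AA: "br (wmono k * DD p) (wmono l * DD q) \<approx>
   of_nat (Poly_Mapping.lookup l p) * (wmono (k + (l - ep p)) * DD q)
 - of_nat (Poly_Mapping.lookup k q) * (wmono (l + (k - ep q)) * (DD p :: ('n::finite, 'k::comm_ring_1) tf))"
proof -
  have 1: "wmono k * DD p * (wmono l * DD q) \<approx> wmono (k + l) * DD p * DD q
     + of_nat (Poly_Mapping.lookup l p) * (wmono (k + (l - ep p)) * (DD q :: ('n, 'k) tf))"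
    using AD[of k p l "DD q"] by (simp add: mult.assoc)
  have 2: "wmono l * DD q * (wmono k * DD p) \<approx> wmono (l + k) * DD q * DD p
     + of_nat (Poly_Mapping.lookup k q) * (wmono (l + (k - ep q)) * (DD p :: ('n, 'k) tf))"
    using AD[of l q k "DD p"] by (simp add: mult.assoc)
  have 3: "wmono (k + l) * DD p * DD q \<approx> wmono (l + k) * DD q * (DD p :: ('n, 'k) tf)"
    using teq_lmult[OF T2[of p q], of "wmono (k + l)"] by (simp add: add.commute mult.assoc)
  have "br (wmono k * DD p) (wmono l * DD q) \<approx>
      (wmono (l + k) * DD q * DD p + of_nat (Poly_Mapping.lookup l p) * (wmono (k + (l - ep p)) * (DD q :: ('n, 'k) tf)))
    - (wmono (l + k) * DD q * DD p + of_nat (Poly_Mapping.lookup k q) * (wmono (l + (k - ep q)) * DD p))"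
    unfolding br_def by (rule teq_diff[OF teq_trans[OF 1 teq_add[OF 3 teq_refl]] 2])
  then show ?thesis by simp
qed
lemma cm_LV_DD: "cm (LV m q) (DD p)" by (rule cm_LL_DD)

lemma AB: "br (wmono k * DD p) (wmono a * LV m q) \<approx>
   of_nat (Poly_Mapping.lookup a p) * (wmono (k + (a - ep p)) * (LV m q :: ('n::finite, 'k::comm_ring_1) tf))"
proof -
  have 1: "wmono k * DD p * (wmono a * LV m q) \<approx> wmono (k + a) * DD p * LV m q
     + of_nat (Poly_Mapping.lookup a p) * (wmono (k + (a - ep p)) * (LV m q :: ('n, 'k) tf))"
    using AD[of k p a "LV m q"] by (simp add: mult.assoc)
  have "wmono a * LV m q * (wmono k * DD p) = wmono a * (LV m q * wmono k) * (DD p :: ('n, 'k) tf)"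
    by (simp add: mult.assoc)
  also have "\<dots> \<approx> wmono a * (wmono k * LV m q) * DD p"
    using cm_LL_wmono[of "Abs_lp (vfm m q)" k] unfolding cm_def by (rule teq_rmult[OF teq_lmult])
  also have "\<dots> = (wmono a * wmono k) * (LV m q * DD p)" by (simp add: mult.assoc)
  also have "\<dots> \<approx> wmono (a + k) * (DD p * LV m q)"
    using cm_LV_DD[of m q p] unfolding cm_def
    by (rule teq_mult[OF wmono_mult])
  finally have 2: "wmono a * LV m q * (wmono k * DD p) \<approx> wmono (k + a) * DD p * (LV m q :: ('n, 'k) tf)"
    by (simp add: add.commute mult.assoc)
  have "br (wmono k * DD p) (wmono a * LV m q) \<approx>
     (wmono (k + a) * DD p * LV m q + of_nat (Poly_Mapping.lookup a p) * (wmono (k + (a - ep p)) * (LV m q :: ('n, 'k) tf)))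
     - wmono (k + a) * DD p * LV m q"
    unfolding br_def by (rule teq_diff[OF 1 2])
  then show ?thesis by simp
qed

lemma BB: "br (wmono a * LL u) (wmono b * LL v) \<approx>
   wmono (a + b) * (LL (Abs_lp (lie (Rep_lp u) (Rep_lp v))) :: ('n::finite, 'k::comm_ring_1) tf)"
proof -
  have X: "wmono a * LL u * (wmono b * LL v) \<approx> wmono (a + b) * (LL u * (LL v :: ('n, 'k) tf))" if "True" for a b u v
  proof -
    have "wmono a * LL u * (wmono b * LL v) = wmono a * (LL u * wmono b) * (LL v :: ('n, 'k) tf)"
      by (simp add: mult.assoc)
    also have "\<dots> \<approx> wmono a * (wmono b * LL u) * LL v"
      using cm_LL_wmono[of u b] unfolding cm_def by (rule teq_rmult[OF teq_lmult])
    also have "\<dots> = (wmono a * wmono b) * (LL u * LL v)" by (simp add: mult.assoc)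
    also have "\<dots> \<approx> wmono (a + b) * (LL u * LL v)" by (rule teq_rmult[OF wmono_mult])
    finally show ?thesis .
  qed
  have "br (wmono a * LL u) (wmono b * LL v) \<approx> wmono (a + b) * (LL u * LL v) - wmono (b + a) * (LL v * (LL u :: ('n, 'k) tf))"
    unfolding br_def by (rule teq_diff[OF X X]) simp_all
  also have "\<dots> = wmono (a + b) * (LL u * LL v - LL v * LL u)" by (simp add: add.commute right_diff_distrib)
  also have "\<dots> \<approx> wmono (a + b) * (LL (Abs_lp (lie (Rep_lp u) (Rep_lp v))))"
    using T6[of u v] by (intro teq_lmult) (simp add: teq_iff_diff[of "LL u * LL v"] teq_iff_diff[of "LL u * LL v - LL v * LL u"] diff_diff_eq)
  finally show ?thesis .
qed

lemma smult_vfm_lp: "m \<noteq> 0 \<Longrightarrow> smult_vf c (vfm m q) \<in> {\<eta> :: ('n, 'k::comm_ring_1) vfield. \<forall>p. Poly_Mapping.lookup (\<eta> p) 0 = 0}"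
  by (auto simp: smult_vf_def vfm_def smult_mp_def mult_single lookup_single when_def)

lemma vfm_lp: "m \<noteq> 0 \<Longrightarrow> vfm m q \<in> {\<eta> :: ('n, 'k::comm_ring_1) vfield. \<forall>p. Poly_Mapping.lookup (\<eta> p) 0 = 0}"
  by (auto simp: vfm_def lookup_single when_def)

lemma add_ne0: "m \<noteq> 0 \<Longrightarrow> m + x \<noteq> (0 :: 'n \<Rightarrow>\<^sub>0 nat)"
proof
  assume "m \<noteq> 0" "m + x = 0"
  then have "Poly_Mapping.lookup m i = 0" for i by (metis add_is_0 lookup_add lookup_zero)
  then have "m = 0" by (simp add: poly_mapping_eqI)
  with \<open>m \<noteq> 0\<close> show False ..
qed

lemma nat_single: "(of_nat n :: ('a::monoid_add \<Rightarrow>\<^sub>0 'b::semiring_1)) * Poly_Mapping.single A 1 = Poly_Mapping.single A (of_nat n)"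
  using mult_single[of 0 "of_nat n :: 'b" A 1] by simp

lemma LieL:
  assumes "m \<noteq> 0" "m' \<noteq> 0"
  shows "LL (Abs_lp (lie (vfm m p) (vfm m' q))) \<approx>
    of_nat (Poly_Mapping.lookup m' p) * LV (m + (m' - ep p)) q
  - of_nat (Poly_Mapping.lookup m q) * (LV (m' + (m - ep q)) p :: ('n::finite, 'k::comm_ring_1) tf)"
proof -
  let ?A = "m + (m' - ep p)" and ?B = "m' + (m - ep q)"
  have A0: "?A \<noteq> 0" using assms(1) by (rule add_ne0)
  have B0: "?B \<noteq> 0" using assms(2) by (rule add_ne0)
  let ?a = "Abs_lp (smult_vf (of_nat (Poly_Mapping.lookup m' p)) (vfm ?A q)) :: ('n, 'k) lplus"
  let ?b = "Abs_lp (smult_vf (- of_nat (Poly_Mapping.lookup m q)) (vfm ?B p)) :: ('n, 'k) lplus"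
  have Ra: "Rep_lp ?a = smult_vf (of_nat (Poly_Mapping.lookup m' p)) (vfm ?A q)"
    by (rule Abs_lp_inverse, rule smult_vfm_lp[OF A0])
  have Rb: "Rep_lp ?b = smult_vf (- of_nat (Poly_Mapping.lookup m q)) (vfm ?B p)"
    by (rule Abs_lp_inverse, rule smult_vfm_lp[OF B0])
  have RA: "Rep_lp (Abs_lp (vfm ?A q) :: ('n, 'k) lplus) = vfm ?A q"
    by (rule Abs_lp_inverse, rule vfm_lp[OF A0])
  have RB: "Rep_lp (Abs_lp (vfm ?B p) :: ('n, 'k) lplus) = vfm ?B p"
    by (rule Abs_lp_inverse, rule vfm_lp[OF B0])
  have lie_eq: "lie (vfm m p) (vfm m' q) = (\<lambda>r. Rep_lp ?a r + Rep_lp ?b r)"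
    unfolding Ra Rb unfolding vfm_vmon lie_vmon
    by (rule ext) (simp add: smult_vf_def vmon_apply smult_mp_def mult_single single_uminus nat_single)
  have "LL (Abs_lp (lie (vfm m p) (vfm m' q))) \<approx> LL ?a + (LL ?b :: ('n, 'k) tf)"
    unfolding lie_eq by (rule T4)
  also have "\<dots> \<approx> scal (of_nat (Poly_Mapping.lookup m' p)) * LV ?A q + scal (- of_nat (Poly_Mapping.lookup m q)) * LV ?B p"
    by (rule teq_add[OF T5[of "of_nat (Poly_Mapping.lookup m' p) :: 'k" "Abs_lp (vfm ?A q) :: ('n, 'k) lplus", unfolded RA]
      T5[of "- of_nat (Poly_Mapping.lookup m q) :: 'k" "Abs_lp (vfm ?B p) :: ('n, 'k) lplus", unfolded RB]])
  finally show ?thesis by (simp add: scal_uminus)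
qed

lemmas lk_simps = lookup_add lookup_minus lookup_single when_def

lemma E1:
  assumes "\<forall>i. Poly_Mapping.lookup m' i \<le> Poly_Mapping.lookup l i" "Poly_Mapping.lookup m' p < Poly_Mapping.lookup l p"
  shows "k + ((l - m') - ep p) = (k + (l - ep p)) - m'"
proof (rule poly_mapping_eqI)
  fix i show "Poly_Mapping.lookup (k + ((l - m') - ep p)) i = Poly_Mapping.lookup ((k + (l - ep p)) - m') i"
    using assms(1)[rule_format, of i] assms(2) by (cases "i = p") (auto simp: lk_simps)
qed

lemma E2:
  assumes "\<forall>i. Poly_Mapping.lookup m i \<le> Poly_Mapping.lookup k i" "\<forall>i. Poly_Mapping.lookup m' i \<le> Poly_Mapping.lookup l i"
    "0 < Poly_Mapping.lookup m' p"
  shows "(k - m) + (l - m') = (k + (l - ep p)) - (m + (m' - ep p))"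
proof (rule poly_mapping_eqI)
  fix i show "Poly_Mapping.lookup ((k - m) + (l - m')) i = Poly_Mapping.lookup ((k + (l - ep p)) - (m + (m' - ep p))) i"
    using assms(1)[rule_format, of i] assms(2)[rule_format, of i] assms(3)
    by (cases "i = p") (auto simp: lk_simps)
qed

lemma E3a: "m' \<in> MM l \<Longrightarrow> Poly_Mapping.lookup m' p < Poly_Mapping.lookup l p \<Longrightarrow> m' \<in> MM (k + (l - ep p))"
  unfolding MM_def
  by (auto simp: lk_simps) (metis diff_le_mono le_add2 le_trans less_imp_le_nat Suc_leI diff_Suc_1 le_diff_conv2 trans_le_add2)

lemma E3b: "m \<in> MM k \<Longrightarrow> m' \<in> MM l \<Longrightarrow> 0 < Poly_Mapping.lookup m' p \<Longrightarrow> m + (m' - ep p) \<in> MM (k + (l - ep p))"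
proof -
  assume m: "m \<in> MM k" and m': "m' \<in> MM l" and pos: "0 < Poly_Mapping.lookup m' p"
  have "m \<noteq> 0" using m by (simp add: MM_def)
  then have "m + (m' - ep p) \<noteq> 0" by (rule add_ne0)
  moreover have "Poly_Mapping.lookup (m + (m' - ep p)) i \<le> Poly_Mapping.lookup (k + (l - ep p)) i" for i
  proof -
    have a: "Poly_Mapping.lookup m i \<le> Poly_Mapping.lookup k i" "Poly_Mapping.lookup m' i \<le> Poly_Mapping.lookup l i"
      "Poly_Mapping.lookup m p \<le> Poly_Mapping.lookup k p" "Poly_Mapping.lookup m' p \<le> Poly_Mapping.lookup l p"
      using m m' unfolding MM_def by auto
    show ?thesis using a pos by (cases "i = p") (auto simp: lk_simps)
  qed
  ultimately show ?thesis unfolding MM_def by auto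
qed

lemma E4: "m' \<in> MM l \<Longrightarrow> m' \<notin> MM (k + (l - ep p)) \<Longrightarrow> Poly_Mapping.lookup l p - Poly_Mapping.lookup m' p = 0"
proof (rule ccontr)
  assume m': "m' \<in> MM l" and n: "m' \<notin> MM (k + (l - ep p))" and c: "Poly_Mapping.lookup l p - Poly_Mapping.lookup m' p \<noteq> 0"
  then have "Poly_Mapping.lookup m' p < Poly_Mapping.lookup l p" by simp
  from E3a[OF m' this, of k] n show False by simp
qed

lemma E5: "j \<in> MM P \<Longrightarrow> j \<notin> MM l \<Longrightarrow> mchoose l j = 0"
  by (rule mchoose_eq_0) (auto simp: MM_def)

lemma QI:
  fixes k l :: "'n::finite \<Rightarrow>\<^sub>0 nat"
  shows "(\<Sum>m'\<in>MM l. of_nat (mchoose l m') * (of_nat (Poly_Mapping.lookup (l - m') p) * (wmono (k + ((l - m') - ep p)) * LV m' q)))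
       + (\<Sum>m\<in>MM k. \<Sum>m'\<in>MM l. of_nat (mchoose k m) * (of_nat (mchoose l m') * (of_nat (Poly_Mapping.lookup m' p)
            * (wmono ((k - m) + (l - m')) * LV (m + (m' - ep p)) q))))
       = of_nat (Poly_Mapping.lookup l p) * (SS (k + (l - ep p)) q :: ('n, 'k::comm_ring_1) tf)"
proof -
  define P where "P = k + (l - ep p)"
  define F where "F j = (wmono (P - j) * LV j q :: ('n, 'k) tf)" for j
  define h1 where "h1 j = (of_nat (mchoose l j * (Poly_Mapping.lookup l p - Poly_Mapping.lookup j p)) * F j :: ('n, 'k) tf)" for j
  have part1: "(\<Sum>m'\<in>MM l. of_nat (mchoose l m') * (of_nat (Poly_Mapping.lookup (l - m') p) * (wmono (k + ((l - m') - ep p)) * (LV m' q :: ('n, 'k) tf))))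
      = (\<Sum>j\<in>MM P. h1 j)"
  proof -
    have "(\<Sum>m'\<in>MM l. of_nat (mchoose l m') * (of_nat (Poly_Mapping.lookup (l - m') p) * (wmono (k + ((l - m') - ep p)) * (LV m' q :: ('n, 'k) tf))))
        = (\<Sum>j\<in>MM l. h1 j)"
    proof (rule sum.cong[OF refl])
      fix m' assume m': "m' \<in> MM l"
      show "of_nat (mchoose l m') * (of_nat (Poly_Mapping.lookup (l - m') p) * (wmono (k + ((l - m') - ep p)) * (LV m' q :: ('n, 'k) tf))) = h1 m'"
      proof (cases "Poly_Mapping.lookup m' p < Poly_Mapping.lookup l p")
        case True
        then have "k + ((l - m') - ep p) = P - m'" using m' E1 unfolding P_def MM_def by auto
        then show ?thesis by (simp add: h1_def F_def lookup_minus mult.assoc)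
      next
        case False then show ?thesis by (simp add: h1_def lookup_minus)
      qed
    qed
    also have "\<dots> = (\<Sum>j\<in>MM l \<union> MM P. h1 j)"
      by (rule sum.mono_neutral_left) (auto simp: finite_MM h1_def P_def E5[of _ "k + (l - ep p)"])
    also have "\<dots> = (\<Sum>j\<in>MM P. h1 j)"
      by (rule sum.mono_neutral_right) (auto simp: finite_MM h1_def P_def dest: E4[of _ l k p])
    finally show ?thesis .
  qed
  define S' where "S' = {s \<in> MM k \<times> MM l. 0 < Poly_Mapping.lookup (snd s) p}"
  define c where "c s = mchoose k (fst s) * mchoose l (snd s) * Poly_Mapping.lookup (snd s) p" for s
  define g where "g s = fst s + (snd s - ep p)" for s
  have finS': "finite S'" unfolding S'_def using finite_MM by (auto intro: finite_subset[of _ "MM k \<times> MM l"])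
  have part2: "(\<Sum>m\<in>MM k. \<Sum>m'\<in>MM l. of_nat (mchoose k m) * (of_nat (mchoose l m') * (of_nat (Poly_Mapping.lookup m' p)
            * (wmono ((k - m) + (l - m')) * (LV (m + (m' - ep p)) q :: ('n, 'k) tf)))))
      = (\<Sum>j\<in>MM P. of_nat (\<Sum>s\<in>{x. x \<in> S' \<and> g x = j}. c s) * F j)"
  proof -
    let ?t = "\<lambda>s. of_nat (mchoose k (fst s)) * (of_nat (mchoose l (snd s)) * (of_nat (Poly_Mapping.lookup (snd s) p)
            * (wmono ((k - fst s) + (l - snd s)) * (LV (fst s + (snd s - ep p)) q :: ('n, 'k) tf))))"
    have "(\<Sum>m\<in>MM k. \<Sum>m'\<in>MM l. of_nat (mchoose k m) * (of_nat (mchoose l m') * (of_nat (Poly_Mapping.lookup m' p)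
            * (wmono ((k - m) + (l - m')) * (LV (m + (m' - ep p)) q :: ('n, 'k) tf)))))
        = (\<Sum>s\<in>MM k \<times> MM l. ?t s)"
      by (simp add: sum.cartesian_product split_beta)
    also have "\<dots> = (\<Sum>s\<in>S'. ?t s)"
      by (rule sum.mono_neutral_right) (auto simp: S'_def finite_MM)
    also have "\<dots> = (\<Sum>s\<in>S'. of_nat (c s) * F (g s))"
    proof (rule sum.cong[OF refl])
      fix s assume s: "s \<in> S'"
      then have "(k - fst s) + (l - snd s) = P - g s"
        unfolding P_def g_def S'_def MM_def by (intro E2) auto
      then show "?t s = of_nat (c s) * F (g s)" by (simp add: c_def F_def g_def mult.assoc)
    qed
    also have "\<dots> = (\<Sum>j\<in>MM P. \<Sum>s\<in>{x. x \<in> S' \<and> g x = j}. of_nat (c s) * F (g s))"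
    proof (rule sum.group[symmetric, OF finS' finite_MM])
      show "g ` S' \<subseteq> MM P" unfolding P_def g_def S'_def using E3b[of _ k _ l p] by auto
    qed
    also have "\<dots> = (\<Sum>j\<in>MM P. of_nat (\<Sum>s\<in>{x. x \<in> S' \<and> g x = j}. c s) * F j)"
    proof (rule sum.cong[OF refl])
      fix j
      have "(\<Sum>s\<in>{x. x \<in> S' \<and> g x = j}. of_nat (c s) * F (g s)) = (\<Sum>s\<in>{x. x \<in> S' \<and> g x = j}. of_nat (c s) * F j)"
        by (rule sum.cong) auto
      then show "(\<Sum>s\<in>{x. x \<in> S' \<and> g x = j}. of_nat (c s) * F (g s)) = of_nat (\<Sum>s\<in>{x. x \<in> S' \<and> g x = j}. c s) * F j"
        by (simp add: sum_distrib_right)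
    qed
    finally show ?thesis .
  qed
  have coeff: "mchoose l j * (Poly_Mapping.lookup l p - Poly_Mapping.lookup j p) + (\<Sum>s\<in>{x. x \<in> S' \<and> g x = j}. c s)
      = Poly_Mapping.lookup l p * mchoose P j" for j
  proof -
    have "{x. x \<in> S' \<and> g x = j} = {s\<in>MM k \<times> MM l. 0 < Poly_Mapping.lookup (snd s) p \<and> fst s + (snd s - Poly_Mapping.single p 1) = j}"
      by (auto simp: S'_def g_def)
    then show ?thesis using coeff_identity[of l j p k] unfolding P_def c_def by simp
  qed
  have "(\<Sum>j\<in>MM P. h1 j) + (\<Sum>j\<in>MM P. of_nat (\<Sum>s\<in>{x. x \<in> S' \<and> g x = j}. c s) * F j)
      = (\<Sum>j\<in>MM P. of_nat (Poly_Mapping.lookup l p * mchoose P j) * F j)"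
    unfolding sum.distrib[symmetric] h1_def
    by (rule sum.cong[OF refl]) (simp add: coeff[symmetric] distrib_right del: of_nat_mult)
  also have "\<dots> = of_nat (Poly_Mapping.lookup l p) * SS P q"
    by (simp add: SS_def F_def sum_distrib_left mult.assoc)
  finally show ?thesis using part1 part2 unfolding P_def by simp
qed

lemma nat_swap: "of_nat a * (of_nat b * Z) = of_nat b * (of_nat a * (Z :: 'a::ring_1))"
  by (metis mult.assoc mult_of_nat_commute)

lemma core7:
  fixes k l :: "'n::finite \<Rightarrow>\<^sub>0 nat"
  shows "br (phiV k p) (phiV l q) \<approx>
     of_nat (Poly_Mapping.lookup l p) * phiV (k + (l - ep p)) q
   - of_nat (Poly_Mapping.lookup k q) * (phiV (l + (k - ep q)) p :: ('n, 'k::comm_ring_1) tf)"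
proof -
  let ?Ak = "wmono k * DD p :: ('n, 'k) tf"
  let ?Al = "wmono l * DD q :: ('n, 'k) tf"
  define T1 where "T1 = (\<Sum>m'\<in>MM l. of_nat (mchoose l m') * (of_nat (Poly_Mapping.lookup (l - m') p)
      * (wmono (k + ((l - m') - ep p)) * LV m' q)) :: ('n, 'k) tf)"
  define T1' where "T1' = (\<Sum>m\<in>MM k. of_nat (mchoose k m) * (of_nat (Poly_Mapping.lookup (k - m) q)
      * (wmono (l + ((k - m) - ep q)) * LV m p)) :: ('n, 'k) tf)"
  define T2 where "T2 = (\<Sum>m\<in>MM k. \<Sum>m'\<in>MM l. of_nat (mchoose k m) * (of_nat (mchoose l m') * (of_nat (Poly_Mapping.lookup m' p)
      * (wmono ((k - m) + (l - m')) * LV (m + (m' - ep p)) q))) :: ('n, 'k) tf)"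
  define T2' where "T2' = (\<Sum>m\<in>MM k. \<Sum>m'\<in>MM l. of_nat (mchoose k m) * (of_nat (mchoose l m') * (of_nat (Poly_Mapping.lookup m q)
      * (wmono ((k - m) + (l - m')) * LV (m' + (m - ep q)) p))) :: ('n, 'k) tf)"
  have s1: "br ?Ak ?Al \<approx> of_nat (Poly_Mapping.lookup l p) * (wmono (k + (l - ep p)) * DD q)
      - of_nat (Poly_Mapping.lookup k q) * (wmono (l + (k - ep q)) * DD p)"
    by (rule AA)
  have s2: "br ?Ak (SS l q) \<approx> T1"
    unfolding SS_def T1_def br_sum_right br_nat_right
    by (rule teq_sum, rule teq_lmult, rule AB)
  have s3: "br (SS k p) ?Al \<approx> - T1'"
    unfolding br_antisym[of "SS k p"] unfolding SS_def T1'_def br_sum_right br_nat_right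
    by (rule teq_uminus, rule teq_sum, rule teq_lmult, rule AB)
  have s4: "br (SS k p) (SS l q) \<approx> T2 - T2'"
  proof -
    have "br (SS k p) (SS l q) \<approx> (\<Sum>m\<in>MM k. \<Sum>m'\<in>MM l. of_nat (mchoose k m) * (of_nat (mchoose l m')
        * br (wmono (k - m) * LV m p) (wmono (l - m') * (LV m' q :: ('n, 'k) tf))))"
      unfolding SS_def br_sum_left br_nat_left unfolding br_sum_right br_nat_right
      by (rule teq_eq) (simp add: sum_distrib_left)
    also have "\<dots> \<approx> (\<Sum>m\<in>MM k. \<Sum>m'\<in>MM l. of_nat (mchoose k m) * (of_nat (mchoose l m')
        * (wmono ((k - m) + (l - m')) * (of_nat (Poly_Mapping.lookup m' p) * LV (m + (m' - ep p)) q
           - of_nat (Poly_Mapping.lookup m q) * LV (m' + (m - ep q)) p))))"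
    proof (intro teq_sum teq_lmult)
      fix m m' assume m: "m \<in> MM k" and m': "m' \<in> MM l"
      have nz: "m \<noteq> 0" "m' \<noteq> 0" using m m' by (auto simp: MM_def)
      have r1: "Rep_lp (Abs_lp (vfm m p) :: ('n, 'k) lplus) = vfm m p"
        by (rule Abs_lp_inverse, rule vfm_lp[OF nz(1)])
      have r2: "Rep_lp (Abs_lp (vfm m' q) :: ('n, 'k) lplus) = vfm m' q"
        by (rule Abs_lp_inverse, rule vfm_lp[OF nz(2)])
      have "br (wmono (k - m) * LV m p) (wmono (l - m') * (LV m' q :: ('n, 'k) tf))
          \<approx> wmono ((k - m) + (l - m')) * LL (Abs_lp (lie (vfm m p) (vfm m' q)))"
        using BB[of "k - m" "Abs_lp (vfm m p) :: ('n, 'k) lplus" "l - m'" "Abs_lp (vfm m' q) :: ('n, 'k) lplus"]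
        unfolding r1 r2 .
      also have "wmono ((k - m) + (l - m')) * LL (Abs_lp (lie (vfm m p) (vfm m' q)))
          \<approx> wmono ((k - m) + (l - m')) * (of_nat (Poly_Mapping.lookup m' p) * LV (m + (m' - ep p)) q
           - of_nat (Poly_Mapping.lookup m q) * (LV (m' + (m - ep q)) p :: ('n, 'k) tf))"
        by (rule teq_lmult, rule LieL[OF nz])
      finally show "br (wmono (k - m) * LV m p) (wmono (l - m') * (LV m' q :: ('n, 'k) tf))
          \<approx> wmono ((k - m) + (l - m')) * (of_nat (Poly_Mapping.lookup m' p) * LV (m + (m' - ep p)) q
           - of_nat (Poly_Mapping.lookup m q) * LV (m' + (m - ep q)) p)" .
    qed
    also have "\<dots> \<approx> T2 - T2'"
    proof -
      have inner: "wmono e * (of_nat a * X) = of_nat a * (wmono e * (X :: ('n, 'k) tf))"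
        for e a X by (rule nat_comm_assoc)
      show ?thesis unfolding T2_def T2'_def by (rule teq_eq) (simp only: inner right_diff_distrib sum_subtractf)
    qed
    finally show ?thesis .
  qed
  have q1: "T1 + T2 = of_nat (Poly_Mapping.lookup l p) * SS (k + (l - ep p)) q"
    unfolding T1_def T2_def by (rule QI)
  have q2: "T1' + T2' = of_nat (Poly_Mapping.lookup k q) * SS (l + (k - ep q)) p"
  proof -
    have "T2' = (\<Sum>m'\<in>MM l. \<Sum>m\<in>MM k. of_nat (mchoose l m') * (of_nat (mchoose k m) * (of_nat (Poly_Mapping.lookup m q)
      * (wmono ((l - m') + (k - m)) * LV (m' + (m - ep q)) p))))"
      unfolding T2'_def by (subst sum.swap) (simp add: add.commute nat_swap)
    then show ?thesis unfolding T1'_def by (simp only: QI)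
  qed
  have "br (phiV k p) (phiV l q) = br ?Ak ?Al + br ?Ak (SS l q) + br (SS k p) ?Al + br (SS k p) (SS l q)"
    unfolding phiV_split br_add_left br_add_right by (simp add: add.assoc)
  also have "\<dots> \<approx> (of_nat (Poly_Mapping.lookup l p) * (wmono (k + (l - ep p)) * DD q)
      - of_nat (Poly_Mapping.lookup k q) * (wmono (l + (k - ep q)) * DD p)) + T1 + - T1' + (T2 - T2')"
    by (intro teq_add s1 s2 s3 s4)
  also have "\<dots> = of_nat (Poly_Mapping.lookup l p) * (wmono (k + (l - ep p)) * DD q) + (T1 + T2)
      - (of_nat (Poly_Mapping.lookup k q) * (wmono (l + (k - ep q)) * DD p) + (T1' + T2'))"
    by (simp add: algebra_simps)
  also have "\<dots> = of_nat (Poly_Mapping.lookup l p) * phiV (k + (l - ep p)) q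
   - of_nat (Poly_Mapping.lookup k q) * phiV (l + (k - ep q)) p"
    unfolding q1 q2 phiV_split by (simp add: distrib_left)
  finally show ?thesis .
qed

definition hS :: "('n::finite, 'k::comm_ring_1) sgen \<Rightarrow> ('n, 'k) tf" where
  "hS g = (case g of GA f \<Rightarrow> embA f | GV \<eta> \<Rightarrow> vimg \<eta>)"

lemma hS_simps[simp]: "hS (GA f) = embA f" "hS (GV \<eta>) = vimg \<eta>" by (simp_all add: hS_def)

lemma ext_diff: "ext h (a - b) = ext h a - ext h b"
  using ext_add[of h "a - b" b] by simp

lemma teq_sum_zero: "(\<And>i. i \<in> A \<Longrightarrow> f i \<approx> 0) \<Longrightarrow> sum f A \<approx> 0"
  using teq_sum[of A f "\<lambda>_. 0"] by simp

lemma embA_add: "embA (f + g) = embA f + embA g" by (simp add: embA_lin lin_add)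
lemma embA_single: "embA (Poly_Mapping.single k c) = scal c * wmono k" by (simp add: embA_lin lin_single)

lemma R3: "embA (f * g) - embA f * embA g \<approx> (0 :: ('n::finite, 'k::comm_ring_1) tf)"
proof -
  define H where "H f g = embA (f * g) - embA f * (embA g :: ('n, 'k) tf)" for f g
  have addf: "H (a + b) g = H a g + H b g" for a b g
    by (simp add: H_def distrib_right embA_add algebra_simps)
  have addg: "H f (a + b) = H f a + H f b" for f a b
    by (simp add: H_def distrib_left embA_add algebra_simps)
  have mono: "H (Poly_Mapping.single k c) (Poly_Mapping.single l d) \<approx> 0" for k l c d
  proof -
    have "H (Poly_Mapping.single k c) (Poly_Mapping.single l d) = scal (c * d) * (wmono (k + l) - wmono k * wmono l)"
      by (simp add: H_def mult_single embA_single scal_mult_mult[symmetric] right_diff_distrib)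
    also have "\<dots> \<approx> scal (c * d) * 0"
      by (rule teq_lmult) (simp add: teq_iff_diff[symmetric] teq_sym[OF wmono_mult])
    finally show ?thesis by simp
  qed
  have "H f g = (\<Sum>k\<in>Poly_Mapping.keys f. H (Poly_Mapping.single k (Poly_Mapping.lookup f k)) g)"
    by (rule additive_expand[of "\<lambda>f. H f g"]) (rule addf)
  also have "\<dots> = (\<Sum>k\<in>Poly_Mapping.keys f. \<Sum>l\<in>Poly_Mapping.keys g.
      H (Poly_Mapping.single k (Poly_Mapping.lookup f k)) (Poly_Mapping.single l (Poly_Mapping.lookup g l)))"
    by (rule sum.cong[OF refl], rule additive_expand[of "H _"], rule addg)
  finally have "H f g = \<dots>" .
  moreover have "\<dots> \<approx> 0" by (intro teq_sum_zero mono)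
  ultimately show ?thesis unfolding H_def by simp
qed

lemma scal_nat_assoc: "scal (c * (of_nat n * d)) = scal (c * d) * (of_nat n :: ('g, 'k::comm_ring_1) falg)"
proof -
  have "c * (of_nat n * d) = (c * d) * of_nat n" by (simp add: algebra_simps)
  then have "scal (c * (of_nat n * d)) = scal (c * d) * (scal (of_nat n) :: ('g, 'k) falg)"
    by (simp only: scal_mult)
  then show ?thesis by simp
qed

lemma scal_mm2: "scal c * (A * (scal d * B)) = scal (c * d) * (A * (B :: ('g, 'k::comm_ring_1) falg))"
  using scal_mult_mult[of c d A B] by (simp add: mult.assoc)

lemma R8: "vimg \<eta> * embA f - embA f * vimg \<eta> - embA (act \<eta> f) \<approx> (0 :: ('n::finite, 'k::comm_ring_1) tf)"
proof -
  define G where "G \<eta> f = vimg \<eta> * embA f - embA f * vimg \<eta> - (embA (act \<eta> f) :: ('n, 'k) tf)" for \<eta> f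
  have adde: "G (\<lambda>r. a r + b r) f = G a f + G b f" for a b f
    by (simp add: G_def vimg_add act_add1 embA_add algebra_simps)
  have addf: "G \<eta> (a + b) = G \<eta> a + G \<eta> b" for \<eta> a b
    by (simp add: G_def act_add2 embA_add algebra_simps)
  have mono: "G (vmon p k c) (Poly_Mapping.single l d) \<approx> 0" for p k c l d
  proof -
    let ?W = "wmono (k + (l - ep p)) :: ('n, 'k) tf"
    let ?n = "Poly_Mapping.lookup l p"
    have "G (vmon p k c) (Poly_Mapping.single l d) = scal (c * d) * (br (phiV k p) (wmono l) - of_nat ?n * ?W)"
      by (simp add: G_def vimg_vmon embA_single act_vmon_single scal_mm2 scal_nat_assoc
          br_def right_diff_distrib mult.commute[of d c] mult.assoc)
    also have "\<dots> \<approx> scal (c * d) * 0"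
      by (rule teq_lmult) (simp only: teq_iff_diff[symmetric], rule core8)
    finally show ?thesis by simp
  qed
  have "G \<eta> f = (\<Sum>s\<in>UNIV \<times> KK \<eta>. G (vmon (fst s) (snd s) (Poly_Mapping.lookup (\<eta> (fst s)) (snd s))) f)"
    by (rule vadditive_expand[of "\<lambda>\<eta>. G \<eta> f"]) (rule adde)
  also have "\<dots> = (\<Sum>s\<in>UNIV \<times> KK \<eta>. \<Sum>l\<in>Poly_Mapping.keys f.
      G (vmon (fst s) (snd s) (Poly_Mapping.lookup (\<eta> (fst s)) (snd s))) (Poly_Mapping.single l (Poly_Mapping.lookup f l)))"
    by (rule sum.cong[OF refl], rule additive_expand[of "G _"], rule addf)
  finally have "G \<eta> f = \<dots>" .
  moreover have "\<dots> \<approx> 0" by (intro teq_sum_zero mono)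
  ultimately show ?thesis unfolding G_def by simp
qed

lemma R7: "vimg \<eta> * vimg \<xi> - vimg \<xi> * vimg \<eta> - vimg (lie \<eta> \<xi>) \<approx> (0 :: ('n::finite, 'k::comm_ring_1) tf)"
proof -
  define G where "G \<eta> \<xi> = vimg \<eta> * vimg \<xi> - vimg \<xi> * vimg \<eta> - (vimg (lie \<eta> \<xi>) :: ('n, 'k) tf)" for \<eta> \<xi>
  have adde: "G (\<lambda>r. a r + b r) \<xi> = G a \<xi> + G b \<xi>" for a b \<xi>
    by (simp add: G_def vimg_add lie_add1 algebra_simps)
  have addx: "G \<eta> (\<lambda>r. a r + b r) = G \<eta> a + G \<eta> b" for \<eta> a b
    by (simp add: G_def vimg_add lie_add2 algebra_simps)
  have mono: "G (vmon p k c) (vmon q l d) \<approx> 0" for p k c q l d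
  proof -
    let ?A = "phiV (k + (l - ep p)) q :: ('n, 'k) tf"
    let ?B = "phiV (l + (k - ep q)) p :: ('n, 'k) tf"
    let ?a = "Poly_Mapping.lookup l p" and ?b = "Poly_Mapping.lookup k q"
    have "G (vmon p k c) (vmon q l d) = scal (c * d) * (br (phiV k p) (phiV l q) - (of_nat ?a * ?A - of_nat ?b * ?B))"
    proof -
      have e1: "scal (d * (of_nat ?b * c)) = scal (c * d) * (of_nat ?b :: ('n, 'k) tf)"
        using scal_nat_assoc[of c ?b d] by (simp add: algebra_simps)
      show ?thesis
        by (simp add: G_def vimg_vmon lie_vmon vimg_lie_form scal_mm2 scal_nat_assoc e1
          br_def right_diff_distrib mult.commute[of d c] mult.assoc)
    qed
    also have "\<dots> \<approx> scal (c * d) * 0"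
      by (rule teq_lmult) (simp only: teq_iff_diff[symmetric], rule core7)
    finally show ?thesis by simp
  qed
  have "G \<eta> \<xi> = (\<Sum>s\<in>UNIV \<times> KK \<eta>. G (vmon (fst s) (snd s) (Poly_Mapping.lookup (\<eta> (fst s)) (snd s))) \<xi>)"
    by (rule vadditive_expand[of "\<lambda>\<eta>. G \<eta> \<xi>"]) (rule adde)
  also have "\<dots> = (\<Sum>s\<in>UNIV \<times> KK \<eta>. \<Sum>t\<in>UNIV \<times> KK \<xi>.
      G (vmon (fst s) (snd s) (Poly_Mapping.lookup (\<eta> (fst s)) (snd s))) (vmon (fst t) (snd t) (Poly_Mapping.lookup (\<xi> (fst t)) (snd t))))"
    by (rule sum.cong[OF refl], rule vadditive_expand[of "G _"], rule addx)
  finally have "G \<eta> \<xi> = \<dots>" .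
  moreover have "\<dots> \<approx> 0" by (intro teq_sum_zero mono)
  ultimately show ?thesis unfolding G_def by simp
qed

lemma one_mpoly: "(1 :: ('n, 'k::comm_ring_1) mpoly) = Poly_Mapping.single 0 1" by simp

lemma rel_ok:
  assumes "r \<in> (smash_rel :: (('n::finite, 'k::comm_ring_1) sgen, 'k) falg set)"
  shows "ext hS r \<approx> 0"
  using assms unfolding smash_rel_def
proof (elim UnE)
  assume "r \<in> {gen (GA (f + g)) - gen (GA f) - gen (GA g) | f g. True}"
  then show ?thesis by (auto simp: ext_diff ext_gen embA_add)
next
  assume "r \<in> {gen (GA (smult_mp c f)) - scal c * gen (GA f) | c f. True}"
  then show ?thesis by (auto simp: ext_diff ext_mult ext_scal ext_gen embA_lin lin_smult)
next
  assume "r \<in> {gen (GA (f * g)) - gen (GA f) * gen (GA g) | f g. True}"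
  then show ?thesis by (auto simp: ext_diff ext_mult ext_gen R3)
next
  assume "r \<in> {gen (GA 1) - 1}"
  then show ?thesis by (auto simp: ext_diff ext_one ext_gen embA_lin one_mpoly lin_single simp del: single_one)
next
  assume "r \<in> {gen (GV (\<lambda>p. \<eta> p + \<xi> p)) - gen (GV \<eta>) - gen (GV \<xi>) | \<eta> \<xi>. True}"
  then show ?thesis by (auto simp: ext_diff ext_gen vimg_add)
next
  assume "r \<in> {gen (GV (smult_vf c \<eta>)) - scal c * gen (GV \<eta>) | c \<eta>. True}"
  then show ?thesis by (auto simp: ext_diff ext_mult ext_scal ext_gen vimg_smult)
next
  assume "r \<in> {gen (GV \<eta>) * gen (GV \<xi>) - gen (GV \<xi>) * gen (GV \<eta>) - gen (GV (lie \<eta> \<xi>)) | \<eta> \<xi>. True}"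
  then show ?thesis by (auto simp: ext_diff ext_mult ext_gen R7)
next
  assume "r \<in> {gen (GV \<eta>) * gen (GA f) - gen (GA f) * gen (GV \<eta>) - gen (GA (act \<eta> f)) | \<eta> f. True}"
  then show ?thesis by (auto simp: ext_diff ext_mult ext_gen R8)
qed

theorem lemma3p3:
  fixes k0 :: "'n::finite \<Rightarrow>\<^sub>0 nat" and c0 :: "'k::field_char_0"
  assumes "alg_closed TYPE('k)"
  shows "\<exists>\<phi>. \<phi> \<in> ring_hom (SmashAlg :: (('n, 'k) sgen, 'k) falg set ring) (TargetAlg :: (('n, 'k) tgen, 'k) falg set ring)
            \<and> (\<forall>c::'k. \<phi> (cls smash_rel (scal c)) = cls target_rel (scal c))
            \<and> (\<forall>f :: ('n, 'k) mpoly. \<phi> (cls smash_rel (gen (GA f))) = cls target_rel (embA f))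
            \<and> (\<forall>(k :: 'n \<Rightarrow>\<^sub>0 nat) p. \<phi> (cls smash_rel (gen (GV (vfm k p))))
                   = cls target_rel (phiV k p))"
proof -
  have rel: "ext hS r \<in> JJ (target_rel :: (('n, 'k) tgen, 'k) falg set)"
    if "r \<in> (smash_rel :: (('n, 'k) sgen, 'k) falg set)" for r
    using rel_ok[OF that] unfolding teq_def by simp
  have ex: "\<exists>\<phi>. \<phi> \<in> ring_hom (presented (smash_rel :: (('n, 'k) sgen, 'k) falg set)) (presented (target_rel :: (('n, 'k) tgen, 'k) falg set))
    \<and> (\<forall>a. \<phi> (cls smash_rel a) = cls target_rel (ext hS a))"
    by (rule quotient_hom[OF ext_add ext_mult ext_one]) (rule rel)
  then obtain \<phi> where phi: "\<phi> \<in> ring_hom (presented (smash_rel :: (('n, 'k) sgen, 'k) falg set)) (presented (target_rel :: (('n, 'k) tgen, 'k) falg set))"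
    "\<forall>a. \<phi> (cls smash_rel a) = cls target_rel (ext hS a)"
    by blast
  show ?thesis
    unfolding SmashAlg_def TargetAlg_def
    using phi by (auto simp: ext_scal ext_gen vimg_vfm)
qed

end
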